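(* For every $n\ge1$, \[G_n(x)=\sum_{\Gamma\in\mathcal{G}^\bullet_n}x^{\mathrm{unl}(\Gamma)},\qquad H_n(x)=\sum_{\Gamma\in\mathcal{G}_n}x^{\mathrm{unl}(\Gamma)}.\]
   Context: The polynomials $G_n,H_n$ are defined by $G_1=H_1=1$, $G_{n+1}(x)=(2n+nx)G_n(x)+(1+x)^2G_n'(x)$ and $H_{n+1}(x)=(2n-1+(n-1)x)H_n(x)+(1+x)^2H_n'(x)$. A Greg tree of size $n$ is a finite tree in which $n$ vertices carry the distinct labels $1,\dots,n$, all other vertices are unlabeled, and every unlabeled vertex has degree at least $3$; two Greg trees are identified if there is a tree isomorphism between them preserving labels. $\mathcal{G}_n$ is the (finite) set of Greg trees of size $n$. A rooted Greg tree of size $n$ is a tree with $n$ vertices labeled $1,\dots,n$, other vertices unlabeled, and a distinguished vertex (the root), such that every unlabeled non-root vertex has degree at least $3$ and, if the root is unlabeled, it has degree at least $2$; identified up to isomorphisms preserving labels and root. $\mathcal{G}^\bullet_n$ is the set of rooted Greg trees of size $n$. For a (rooted) Greg tree $\Gamma$, $\mathrm{unl}(\Gamma)$ is its number of unlabeled vertices. *)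

theory Defs
  imports "HOL-Computational_Algebra.Polynomial"
begin

(* The polynomials G_n, H_n (index n >= 1; the value at 0 is an irrelevant default). *)
fun G :: "nat \<Rightarrow> int poly" where
  "G 0 = 0"
| "G (Suc 0) = 1"
| "G (Suc (Suc m)) =
     [:2 * int (Suc m), int (Suc m):] * G (Suc m) + [:1, 1:] ^ 2 * pderiv (G (Suc m))"

fun H :: "nat \<Rightarrow> int poly" where
  "H 0 = 0"
| "H (Suc 0) = 1"
| "H (Suc (Suc m)) =
     [:2 * int (Suc m) - 1, int (Suc m) - 1:] * H (Suc m) + [:1, 1:] ^ 2 * pderiv (H (Suc m))"

(* Concrete trees: vertex set {0..<n+k}; vertex i < n carries label i+1,
   vertices n..<n+k are the k unlabeled vertices. Edges are 2-element sets. *)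
definition verts :: "nat \<Rightarrow> nat \<Rightarrow> nat set" where
  "verts n k = {0..<n+k}"

definition adj :: "nat set set \<Rightarrow> nat \<Rightarrow> nat \<Rightarrow> bool" where
  "adj E u v \<longleftrightarrow> u \<noteq> v \<and> {u, v} \<in> E"

definition deg :: "nat set set \<Rightarrow> nat \<Rightarrow> nat" where
  "deg E v = card {e \<in> E. v \<in> e}"

definition is_tree :: "nat set \<Rightarrow> nat set set \<Rightarrow> bool" where
  "is_tree V E \<longleftrightarrow> finite V \<and> V \<noteq> {} \<and>
     (\<forall>e\<in>E. \<exists>u v. e = {u, v} \<and> u \<noteq> v \<and> u \<in> V \<and> v \<in> V) \<and>
     (\<forall>u\<in>V. \<forall>v\<in>V. (adj E)\<^sup>*\<^sup>* u v) \<and>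
     card E + 1 = card V"

definition greg_raw :: "nat \<Rightarrow> (nat \<times> nat set set) set" where
  "greg_raw n = {(k, E). is_tree (verts n k) E \<and> (\<forall>v\<in>{n..<n+k}. deg E v \<ge> 3)}"

definition rgreg_raw :: "nat \<Rightarrow> (nat \<times> nat set set \<times> nat) set" where
  "rgreg_raw n = {(k, E, r). is_tree (verts n k) E \<and> r \<in> verts n k \<and>
      (\<forall>v\<in>{n..<n+k}. v \<noteq> r \<longrightarrow> deg E v \<ge> 3) \<and>
      (r \<ge> n \<longrightarrow> deg E r \<ge> 2)}"

definition lab_iso :: "nat \<Rightarrow> nat \<Rightarrow> nat set set \<Rightarrow> nat set set \<Rightarrow> (nat \<Rightarrow> nat) \<Rightarrow> bool" where
  "lab_iso n k E E' f \<longleftrightarrow> bij_betw f (verts n k) (verts n k) \<and> (\<forall>i<n. f i = i) \<and>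
      E' = (\<lambda>e. f ` e) ` E"

definition greg_rel :: "nat \<Rightarrow> ((nat \<times> nat set set) \<times> (nat \<times> nat set set)) set" where
  "greg_rel n = {((k, E), (k', E')). (k, E) \<in> greg_raw n \<and> (k', E') \<in> greg_raw n \<and>
      k = k' \<and> (\<exists>f. lab_iso n k E E' f)}"

definition rgreg_rel :: "nat \<Rightarrow> ((nat \<times> nat set set \<times> nat) \<times> (nat \<times> nat set set \<times> nat)) set" where
  "rgreg_rel n = {((k, E, r), (k', E', r')). (k, E, r) \<in> rgreg_raw n \<and> (k', E', r') \<in> rgreg_raw n \<and>
      k = k' \<and> (\<exists>f. lab_iso n k E E' f \<and> f r = r')}"

definition greg_trees :: "nat \<Rightarrow> (nat \<times> nat set set) set set" where
  "greg_trees n = greg_raw n // greg_rel n"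

definition rooted_greg_trees :: "nat \<Rightarrow> (nat \<times> nat set set \<times> nat) set set" where
  "rooted_greg_trees n = rgreg_raw n // rgreg_rel n"

definition unl :: "(nat \<times> 'a) set \<Rightarrow> nat" where
  "unl C = the_elem (fst ` C)"

end

theory Submission
  imports Defs "HOL-Combinatorics.Permutations"
begin

abbreviation reach :: "nat set set \<Rightarrow> nat \<Rightarrow> nat \<Rightarrow> bool" where "reach E \<equiv> (adj E)\<^sup>*\<^sup>*"

definition wfE :: "nat set \<Rightarrow> nat set set \<Rightarrow> bool" where
 "wfE V E \<longleftrightarrow> (\<forall>e\<in>E. \<exists>u v. e = {u,v} \<and> u\<noteq>v \<and> u\<in>V \<and> v\<in>V)"
definition conn :: "nat set \<Rightarrow> nat set set \<Rightarrow> bool" where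
 "conn V E \<longleftrightarrow> (\<forall>u\<in>V. \<forall>v\<in>V. reach E u v)"
definition nbrs :: "nat set set \<Rightarrow> nat \<Rightarrow> nat set" where "nbrs E v = {w. adj E v w}"

lemma is_tree_def2: "is_tree V E \<longleftrightarrow> finite V \<and> V \<noteq> {} \<and> wfE V E \<and> conn V E \<and> card E + 1 = card V"
  by (simp add: is_tree_def wfE_def conn_def)

lemma adj_sym: "adj E u v \<Longrightarrow> adj E v u" by (auto simp: adj_def insert_commute)
lemma adj_irrefl[simp]: "\<not> adj E u u" by (simp add: adj_def)

lemma wfE_sub: "wfE V E \<Longrightarrow> E \<subseteq> Pow V" by (auto simp: wfE_def)
lemma wfE_finite: "finite V \<Longrightarrow> wfE V E \<Longrightarrow> finite E"
  using wfE_sub finite_subset by blast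
lemma adj_in: "wfE V E \<Longrightarrow> adj E u v \<Longrightarrow> u \<in> V \<and> v \<in> V"
  using wfE_sub unfolding adj_def by blast

lemma nbrs_sub: "wfE V E \<Longrightarrow> nbrs E v \<subseteq> V"
  using adj_in by (auto simp: nbrs_def)

lemma edge_cases: "wfE V E \<Longrightarrow> e \<in> E \<Longrightarrow> v \<in> e \<Longrightarrow> \<exists>w. e = {v,w} \<and> v \<noteq> w"
  unfolding wfE_def by (metis doubleton_eq_iff insertE singletonD)

lemma deg_nbrs: assumes "wfE V E" shows "deg E v = card (nbrs E v)"
proof -
  have "bij_betw (\<lambda>w. {v,w}) (nbrs E v) {e\<in>E. v\<in>e}"
    unfolding bij_betw_def inj_on_def
  proof (intro conjI ballI impI)
    fix x y assume "x \<in> nbrs E v" "y \<in> nbrs E v" "{v,x} = {v,y}"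
    then show "x = y" by (auto simp: nbrs_def adj_def doubleton_eq_iff)
  next
    show "(\<lambda>w. {v,w}) ` nbrs E v = {e\<in>E. v\<in>e}"
    proof
      show "(\<lambda>w. {v,w}) ` nbrs E v \<subseteq> {e\<in>E. v\<in>e}" by (auto simp: nbrs_def adj_def)
      show "{e\<in>E. v\<in>e} \<subseteq> (\<lambda>w. {v,w}) ` nbrs E v"
      proof
        fix e assume "e \<in> {e\<in>E. v\<in>e}"
        then obtain w where "e = {v,w}" "v \<noteq> w" "e \<in> E" using edge_cases[OF assms] by blast
        then show "e \<in> (\<lambda>w. {v,w}) ` nbrs E v" by (auto simp: nbrs_def adj_def)
      qed
    qed
  qed
  then show ?thesis unfolding deg_def by (simp add: bij_betw_same_card)
qed

lemma reach_sub: assumes "\<And>u w. adj E1 u w \<Longrightarrow> reach E2 u w" "reach E1 u v" shows "reach E2 u v"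
  using assms(2) by induction (auto intro: rtranclp_trans assms(1))

lemma reach_mono: "E1 \<subseteq> E2 \<Longrightarrow> reach E1 u v \<Longrightarrow> reach E2 u v"
  by (erule reach_sub[rotated]) (auto simp: adj_def intro!: r_into_rtranclp)

lemma reach_avoid_aux:
  assumes F: "{e\<in>E. a\<notin>e} \<subseteq> F"
   and nb: "\<And>x y. adj E a x \<Longrightarrow> adj E a y \<Longrightarrow> reach F x y"
   and r: "reach E u w" and ua: "u \<noteq> a"
  shows "(w \<noteq> a \<longrightarrow> reach F u w) \<and> (w = a \<longrightarrow> (\<exists>x. adj E a x \<and> reach F u x))"
  using r
proof induction
  case base thus ?case using ua by auto
next
  case (step y z)
  show ?case
  proof (cases "y = a")
    case True
    then obtain x where x: "adj E a x" "reach F u x" using step by auto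
    have "z \<noteq> a" using step True by auto
    moreover have "adj E a z" using step True by auto
    ultimately show ?thesis using nb[OF x(1)] x(2) by (auto intro: rtranclp_trans)
  next
    case False
    then have ry: "reach F u y" using step by auto
    show ?thesis
    proof (cases "z = a")
      case True then show ?thesis using ry step adj_sym by blast
    next
      case False
      then have "adj F y z" using F step(2) \<open>y \<noteq> a\<close> by (auto simp: adj_def)
      then show ?thesis using ry False by auto
    qed
  qed
qed

lemma reach_avoid:
  assumes "{e\<in>E. a\<notin>e} \<subseteq> F"
   and "\<And>x y. adj E a x \<Longrightarrow> adj E a y \<Longrightarrow> reach F x y"
   and "reach E u w" and "u \<noteq> a" "w \<noteq> a"
  shows "reach F u w"
  using reach_avoid_aux[OF assms(1-4)] assms(5) by blast

lemma conn_card: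
  assumes fin: "finite V" and wf: "wfE V E" and c: "conn V E" and x: "x \<in> V"
  shows "card V \<le> card E + 1"
proof -
  define d where "d v = (LEAST m. (adj E ^^ m) v x)" for v
  have dd: "(adj E ^^ d v) v x" if "v \<in> V" for v
  proof -
    have "\<exists>m. (adj E ^^ m) v x" using c that x by (simp add: conn_def rtranclp_power)
    then show ?thesis unfolding d_def by (rule LeastI_ex)
  qed
  have nx: "\<exists>y. adj E v y \<and> d y < d v" if vV: "v \<in> V" and vx: "v \<noteq> x" for v
  proof -
    have "d v \<noteq> 0" using dd[OF vV] vx by (metis relpowp_0_E)
    then obtain m where m: "d v = Suc m" by (cases "d v") auto
    then obtain y where y: "adj E v y" "(adj E ^^ m) y x" using dd[OF vV] relpowp_Suc_D2 by metis
    have "d y \<le> m" unfolding d_def using y(2) by (rule Least_le)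
    then show ?thesis using y m by auto
  qed
  define f where "f v = (SOME y. adj E v y \<and> d y < d v)" for v
  have f: "adj E v (f v) \<and> d (f v) < d v" if "v \<in> V" "v \<noteq> x" for v
    unfolding f_def using nx[OF that] by (rule someI_ex)
  have "inj_on (\<lambda>v. {v, f v}) (V - {x})"
  proof (rule inj_onI)
    fix v w assume v: "v \<in> V - {x}" and w: "w \<in> V - {x}" and eq: "{v, f v} = {w, f w}"
    show "v = w"
    proof (rule ccontr)
      assume "v \<noteq> w"
      then have "v = f w" "w = f v" using eq by (auto simp: doubleton_eq_iff)
      then show False using f[of v] f[of w] v w by auto
    qed
  qed
  moreover have "(\<lambda>v. {v, f v}) ` (V - {x}) \<subseteq> E" using f by (auto simp: adj_def)
  ultimately have "card (V - {x}) \<le> card E"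
    using card_inj_on_le wfE_finite[OF fin wf] by blast
  then show ?thesis using x fin by (simp add: card_Diff_singleton)
qed

lemma adj_insert: "adj (insert e E) u w \<longleftrightarrow> adj E u w \<or> (u \<noteq> w \<and> e = {u,w})"
  by (auto simp: adj_def)
lemma adj_Un: "adj (E1 \<union> E2) u w \<longleftrightarrow> adj E1 u w \<or> adj E2 u w"
  by (auto simp: adj_def)
lemma adj_diff: "adj (E - S) u w \<longleftrightarrow> adj E u w \<and> {u,w} \<notin> S"
  by (auto simp: adj_def)

lemma edges_at: assumes "wfE V E" shows "{e\<in>E. a\<in>e} = (\<lambda>z. {a,z}) ` nbrs E a"
proof
  show "(\<lambda>z. {a,z}) ` nbrs E a \<subseteq> {e\<in>E. a\<in>e}" by (auto simp: nbrs_def adj_def)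
  show "{e\<in>E. a\<in>e} \<subseteq> (\<lambda>z. {a,z}) ` nbrs E a"
  proof
    fix e assume "e \<in> {e\<in>E. a\<in>e}"
    then obtain w where "e = {a,w}" "a \<noteq> w" "e \<in> E" using edge_cases[OF assms] by blast
    then show "e \<in> (\<lambda>z. {a,z}) ` nbrs E a" by (auto simp: nbrs_def adj_def)
  qed
qed

definition delv :: "nat \<Rightarrow> nat set set \<Rightarrow> nat set set" where "delv a E = {e\<in>E. a \<notin> e}"
definition subdiv :: "nat \<Rightarrow> nat set \<Rightarrow> nat set set \<Rightarrow> nat set set" where
  "subdiv a e E = (\<lambda>z. {a,z}) ` e \<union> (E - {e})"
definition contract :: "nat \<Rightarrow> nat set set \<Rightarrow> nat set set" where
  "contract a E = insert (nbrs E a) (delv a E)"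

lemma nbrs_delv: "w \<noteq> a \<Longrightarrow> nbrs (delv a E) w = nbrs E w - {a}"
  by (auto simp: nbrs_def adj_def delv_def)

lemma nbrs_insert_other: "w \<notin> e \<Longrightarrow> nbrs (insert e E) w = nbrs E w"
  by (auto simp: nbrs_def adj_def)
lemma nbrs_insert_edge: "a \<noteq> r \<Longrightarrow> nbrs (insert {a,r} E) r = insert a (nbrs E r)"
  by (auto simp: nbrs_def adj_def insert_commute)

lemma tree_card_ge2: "is_tree V E \<Longrightarrow> u \<in> V \<Longrightarrow> w \<in> V \<Longrightarrow> u \<noteq> w \<Longrightarrow> nbrs E u \<noteq> {}"
  unfolding is_tree_def2 conn_def nbrs_def
  by (metis (mono_tags, lifting) converse_rtranclpE empty_Collect_eq)

lemma wfE_delv: "wfE V E \<Longrightarrow> wfE (V - {a}) (delv a E)"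
  unfolding wfE_def delv_def by fastforce

lemma nbrs_not_self: "a \<notin> nbrs E a" by (simp add: nbrs_def)

lemma tree_leaf_remove:
  assumes T: "is_tree V E" and aV: "a \<in> V" and N: "nbrs E a = {v}"
  shows "is_tree (V - {a}) (delv a E)"
proof -
  have wf: "wfE V E" and fin: "finite V" and c: "conn V E" and ce: "card E + 1 = card V"
    using T by (auto simp: is_tree_def2)
  have va: "v \<noteq> a" using N nbrs_not_self by force
  have vV: "v \<in> V" using nbrs_sub[OF wf] N by auto
  have EA: "{e\<in>E. a\<in>e} = {{a,v}}" using edges_at[OF wf, of a] N by simp
  have D: "delv a E = E - {{a,v}}" using EA unfolding delv_def by blast
  have inE: "{a,v} \<in> E" using EA by blast
  have finE: "finite E" using wfE_finite[OF fin wf] .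
  have "card (delv a E) + 1 = card E" using D inE finE
    by (simp add: card_Diff_singleton) (metis card_0_eq empty_iff Suc_pred neq0_conv)
  moreover have "card (V - {a}) = card V - 1" using aV fin by simp
  moreover have "conn (V - {a}) (delv a E)"
    unfolding conn_def
  proof (intro ballI)
    fix u w assume u: "u \<in> V - {a}" and w: "w \<in> V - {a}"
    show "reach (delv a E) u w"
    proof (rule reach_avoid[of E a])
      show "{e\<in>E. a\<notin>e} \<subseteq> delv a E" by (simp add: delv_def)
      show "reach (delv a E) x y" if "adj E a x" "adj E a y" for x y
      proof -
        have "x \<in> nbrs E a" "y \<in> nbrs E a" using that by (auto simp: nbrs_def)
        then show ?thesis using N by auto
      qed
      show "reach E u w" using c u w by (auto simp: conn_def)
    qed (use u w in auto)
  qed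
  ultimately show ?thesis using fin wfE_delv[OF wf, of a] ce va vV
    by (auto simp: is_tree_def2)
qed

lemma tree_leaf_add:
  assumes T: "is_tree V E" and aV: "a \<notin> V" and rV: "r \<in> V"
  shows "is_tree (insert a V) (insert {a,r} E)"
proof -
  have wf: "wfE V E" and fin: "finite V" and c: "conn V E" and ce: "card E + 1 = card V"
    using T by (auto simp: is_tree_def2)
  have finE: "finite E" using wfE_finite[OF fin wf] .
  have nin: "{a,r} \<notin> E" using wfE_sub[OF wf] aV by auto
  have wf2: "wfE (insert a V) (insert {a,r} E)" using wf aV rV unfolding wfE_def by blast
  have E1: "reach (insert {a,r} E) u w" if "u \<in> V" "w \<in> V" for u w
    using reach_mono[of E "insert {a,r} E"] c that by (auto simp: conn_def)
  have ar: "adj (insert {a,r} E) a r" "adj (insert {a,r} E) r a" using aV rV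
    by (auto simp: adj_def insert_commute)
  have "conn (insert a V) (insert {a,r} E)"
    unfolding conn_def
  proof (intro ballI)
    fix u w assume u: "u \<in> insert a V" and w: "w \<in> insert a V"
    have ua: "reach (insert {a,r} E) u r" if "u \<in> insert a V" for u
      using that E1[of u r] rV ar by auto
    have au: "reach (insert {a,r} E) r u" if "u \<in> insert a V" for u
      using that E1[of r u] rV ar by auto
    show "reach (insert {a,r} E) u w" using ua[OF u] au[OF w] by (rule rtranclp_trans)
  qed
  then show ?thesis using wf2 fin nin finE ce aV by (auto simp: is_tree_def2)
qed

lemma tree_contract:
  assumes T: "is_tree V E" and aV: "a \<in> V" and N: "nbrs E a = {x,y}" and xy: "x \<noteq> y"
  shows "{x,y} \<notin> E" "is_tree (V - {a}) (contract a E)"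
proof -
  have wf: "wfE V E" and fin: "finite V" and c: "conn V E" and ce: "card E + 1 = card V"
    using T by (auto simp: is_tree_def2)
  have finE: "finite E" using wfE_finite[OF fin wf] .
  have xa: "x \<noteq> a" "y \<noteq> a" using N nbrs_not_self by force+
  have xV: "x \<in> V" "y \<in> V" using nbrs_sub[OF wf] N by auto
  have EA: "{e\<in>E. a\<in>e} = {{a,x},{a,y}}" using edges_at[OF wf, of a] N by simp
  have D: "delv a E = E - {{a,x},{a,y}}" using EA unfolding delv_def by blast
  have inE: "{a,x} \<in> E" "{a,y} \<in> E" using EA by blast+
  have neq: "{a,x} \<noteq> {a,y}" using xy by (auto simp: doubleton_eq_iff)
  have c2: "card {{a,x},{a,y}} = 2" using neq by simp
  have sub: "{{a,x},{a,y}} \<subseteq> E" using inE by auto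
  have "card E \<ge> 2" using card_mono[OF finE sub] c2 by simp
  moreover have "card (delv a E) = card E - 2" unfolding D using card_Diff_subset[OF _ sub] c2 by simp
  ultimately have cD: "card (delv a E) + 2 = card E" by simp
  have cV: "card (V - {a}) = card V - 1" using aV fin by simp
  have wfD: "wfE (V - {a}) (delv a E)" by (rule wfE_delv[OF wf])
  have wfC: "wfE (V - {a}) (contract a E)"
    using wfD xa xV xy N unfolding contract_def wfE_def by auto
  have nb: "reach (contract a E) p q" if "adj E a p" "adj E a q" for p q
  proof -
    have "p \<in> {x,y}" "q \<in> {x,y}" using that N by (auto simp: nbrs_def)
    moreover have "adj (contract a E) x y" "adj (contract a E) y x" using xy N
      by (auto simp: contract_def adj_def insert_commute)
    ultimately show ?thesis by auto
  qed
  have cC: "conn (V - {a}) (contract a E)"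
    unfolding conn_def
  proof (intro ballI)
    fix u w assume u: "u \<in> V - {a}" and w: "w \<in> V - {a}"
    show "reach (contract a E) u w"
    proof (rule reach_avoid[of E a])
      show "{e\<in>E. a\<notin>e} \<subseteq> contract a E" by (auto simp: delv_def contract_def)
      show "reach E u w" using c u w by (auto simp: conn_def)
    qed (use u w nb in auto)
  qed
  show nin: "{x,y} \<notin> E"
  proof
    assume "{x,y} \<in> E"
    then have "{x,y} \<in> delv a E" using xa by (auto simp: delv_def)
    then have "contract a E = delv a E" using N by (auto simp: contract_def)
    then have "card (V - {a}) \<le> card (delv a E) + 1"
      using conn_card[OF _ wfD] cC fin xV xa by auto
    moreover have "card V \<ge> 3"
    proof -
      have "{a,x,y} \<subseteq> V" using aV xV by auto
      moreover have "card {a,x,y} = 3" using xa xy by auto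
      ultimately show ?thesis using card_mono[OF fin] by metis
    qed
    ultimately show False using cD cV ce by linarith
  qed
  have "nbrs E a \<notin> delv a E" using N nin by (auto simp: delv_def)
  then have "card (contract a E) = card (delv a E) + 1"
    using finE by (simp add: contract_def delv_def)
  then show "is_tree (V - {a}) (contract a E)"
    using cC wfC cD cV ce fin xV xa by (auto simp: is_tree_def2)
qed

lemma tree_subdiv:
  assumes T: "is_tree V E" and eE: "e \<in> E" and aV: "a \<notin> V"
  shows "is_tree (insert a V) (subdiv a e E)"
proof -
  have wf: "wfE V E" and fin: "finite V" and c: "conn V E" and ce: "card E + 1 = card V"
    using T by (auto simp: is_tree_def2)
  have finE: "finite E" using wfE_finite[OF fin wf] .
  obtain x y where e: "e = {x,y}" "x \<noteq> y" "x \<in> V" "y \<in> V" using wf eE unfolding wfE_def by blast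
  have xa: "x \<noteq> a" "y \<noteq> a" using e aV by auto
  have S: "subdiv a e E = insert {a,x} (insert {a,y} (E - {e}))" using e by (auto simp: subdiv_def)
  have n1: "{a,x} \<notin> E - {e}" "{a,y} \<notin> E - {e}" using wfE_sub[OF wf] aV by auto
  have neq: "{a,x} \<noteq> {a,y}" using e by (auto simp: doubleton_eq_iff)
  have "card (subdiv a e E) = card E + 1"
    unfolding S using n1 neq finE eE by (simp add: card_Diff_singleton) (metis card_0_eq empty_iff Suc_pred neq0_conv)
  moreover have wf2: "wfE (insert a V) (subdiv a e E)"
    using wf e xa aV unfolding S wfE_def by blast
  moreover have "conn (insert a V) (subdiv a e E)"
  proof -
    have ax: "adj (subdiv a e E) a x" "adj (subdiv a e E) x a" "adj (subdiv a e E) a y" "adj (subdiv a e E) y a"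
      unfolding S using xa by (auto simp: adj_def insert_commute)
    have old: "reach (subdiv a e E) u w" if "u \<in> V" "w \<in> V" for u w
    proof (rule reach_sub[of E])
      show "reach E u w" using c that by (auto simp: conn_def)
      fix p q assume pq: "adj E p q"
      show "reach (subdiv a e E) p q"
      proof (cases "{p,q} = e")
        case True
        then have "(p = x \<and> q = y) \<or> (p = y \<and> q = x)" using e by (auto simp: doubleton_eq_iff)
        then show ?thesis using ax by (meson converse_rtranclp_into_rtranclp r_into_rtranclp)
      next
        case False
        then have "adj (subdiv a e E) p q" using pq unfolding S by (auto simp: adj_def)
        then show ?thesis by auto
      qed
    qed
    have rx: "reach (subdiv a e E) u x" "reach (subdiv a e E) x u" if "u \<in> insert a V" for u
      using that old[of u x] old[of x u] e ax by auto
    show ?thesis unfolding conn_def using rx by (meson rtranclp_trans)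
  qed
  ultimately show ?thesis using fin ce aV by (auto simp: is_tree_def2)
qed

definition trees :: "nat set \<Rightarrow> nat set \<Rightarrow> nat set set set" where
  "trees L V = {E. is_tree V E \<and> (\<forall>v\<in>V-L. deg E v \<ge> 3)}"
definition rtrees :: "nat set \<Rightarrow> nat set \<Rightarrow> (nat set set \<times> nat) set" where
  "rtrees L V = {(E,r). r \<in> V \<and> E \<in> trees (insert r L) V \<and> (r \<in> L \<or> deg E r \<ge> 2)}"

lemma tree_wf: "is_tree V E \<Longrightarrow> wfE V E" by (simp add: is_tree_def2)
lemma tree_fin: "is_tree V E \<Longrightarrow> finite V" by (simp add: is_tree_def2)
lemma tree_deg: "is_tree V E \<Longrightarrow> deg E v = card (nbrs E v)" using deg_nbrs tree_wf by blast
lemma tree_finE: "is_tree V E \<Longrightarrow> finite E" using wfE_finite tree_wf tree_fin by blast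
lemma tree_cardE: "is_tree V E \<Longrightarrow> card E = card V - 1" unfolding is_tree_def2 by auto
lemma tree_nbrs_fin: "is_tree V E \<Longrightarrow> finite (nbrs E v)"
  using nbrs_sub tree_wf tree_fin finite_subset by metis

lemma finite_trees: "finite V \<Longrightarrow> finite (trees L V)"
proof -
  assume "finite V"
  then have "finite (Pow (Pow V))" by simp
  moreover have "trees L V \<subseteq> Pow (Pow V)" using wfE_sub tree_wf by (auto simp: trees_def)
  ultimately show ?thesis using finite_subset by blast
qed

lemma card_swap: "finite N \<Longrightarrow> a \<notin> N \<Longrightarrow> o' \<in> N \<Longrightarrow> card (insert a (N - {o'})) = card N"
  by (simp add: card_Diff_singleton) (metis card_Diff1_less card_gt_0_iff empty_iff Suc_pred)

lemma delv_noa: "wfE V E \<Longrightarrow> a \<notin> V \<Longrightarrow> delv a E = E"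
  using wfE_sub by (fastforce simp: delv_def)

lemma nbrs_subdiv_a: assumes "wfE V E" "a \<notin> V" "e \<in> E" shows "nbrs (subdiv a e E) a = e"
proof -
  have eV: "e \<subseteq> V" using assms wfE_sub by auto
  have "adj (subdiv a e E) a z \<longleftrightarrow> z \<in> e" for z
  proof
    assume "adj (subdiv a e E) a z"
    then have "a \<noteq> z" "{a,z} \<in> (\<lambda>z. {a,z}) ` e \<union> (E - {e})" by (auto simp: adj_def subdiv_def)
    moreover have "{a,z} \<notin> E" using assms(2) wfE_sub[OF assms(1)] by auto
    ultimately show "z \<in> e" by (auto simp: doubleton_eq_iff)
  next
    assume "z \<in> e" then show "adj (subdiv a e E) a z" using eV assms(2) by (auto simp: adj_def subdiv_def)
  qed
  then show ?thesis by (auto simp: nbrs_def)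
qed

lemma nbrs_subdiv: assumes "wfE V E" "a \<notin> V" "e \<in> E" "w \<noteq> a"
  shows "nbrs (subdiv a e E) w = (if w \<in> e then insert a (nbrs E w - e) else nbrs E w)"
proof -
  obtain x y where e: "e = {x,y}" "x \<noteq> y" "x \<in> V" "y \<in> V" using assms(1,3) unfolding wfE_def by blast
  have xa: "x \<noteq> a" "y \<noteq> a" using e assms(2) by auto
  have S: "subdiv a e E = insert {a,x} (insert {a,y} (E - {{x,y}}))" using e by (auto simp: subdiv_def)
  have "adj (subdiv a e E) w z \<longleftrightarrow> (if w \<in> e then z = a \<or> (adj E w z \<and> z \<notin> e) else adj E w z)" for z
    unfolding S adj_insert adj_diff using assms(4) xa e(2) unfolding e(1) by (auto simp: doubleton_eq_iff adj_def)
  then show ?thesis by (auto simp: nbrs_def)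
qed
lemma card_nbrs_subdiv: assumes "is_tree V E" "a \<notin> V" "e \<in> E" "w \<in> V"
  shows "card (nbrs (subdiv a e E) w) = card (nbrs E w)"
proof -
  have wf: "wfE V E" using assms tree_wf by blast
  have wa: "w \<noteq> a" using assms by auto
  obtain x y where e: "e = {x,y}" "x \<noteq> y" "x \<in> V" "y \<in> V" using wf assms(3) unfolding wfE_def by blast
  show ?thesis
  proof (cases "w \<in> e")
    case True
    define o' where "o' = (if w = x then y else x)"
    have eo: "e = {w, o'}" "w \<noteq> o'" using True e unfolding o'_def by auto
    have o: "nbrs E w - e = nbrs E w - {o'}" "o' \<in> nbrs E w"
      using eo assms(3) nbrs_not_self[of w E] by (auto simp: nbrs_def adj_def)
    have "a \<notin> nbrs E w" using nbrs_sub[OF wf] assms(2) by auto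
    then show ?thesis using True o card_swap[OF tree_nbrs_fin[OF assms(1)]]
      by (simp add: nbrs_subdiv[OF wf assms(2,3) wa])
  next
    case False then show ?thesis by (simp add: nbrs_subdiv[OF wf assms(2,3) wa])
  qed
qed

lemma nbrs_contract: assumes "nbrs E a = {x,y}" "x \<noteq> y" "w \<noteq> a"
  shows "nbrs (contract a E) w = nbrs E w - {a} \<union> (if w = x then {y} else if w = y then {x} else {})"
proof -
  have "adj (contract a E) w z \<longleftrightarrow> (adj E w z \<and> z \<noteq> a) \<or> (w = x \<and> z = y) \<or> (w = y \<and> z = x)" for z
    using assms unfolding contract_def adj_insert unfolding adj_def delv_def by (auto simp: doubleton_eq_iff)
  then show ?thesis by (auto simp: nbrs_def)
qed

lemma card_nbrs_contract: assumes T: "is_tree V E" and aV: "a \<in> V" and N: "nbrs E a = {x,y}" "x \<noteq> y"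
   and w: "w \<in> V" "w \<noteq> a"
  shows "card (nbrs (contract a E) w) = card (nbrs E w)"
proof -
  have nin: "{x,y} \<notin> E" using tree_contract[OF T aV N] by blast
  have fin: "finite (nbrs E w)" using tree_nbrs_fin[OF T] .
  have aw: "a \<in> nbrs E w \<longleftrightarrow> w \<in> {x,y}" using N adj_sym by (auto simp: nbrs_def)
  show ?thesis
  proof (cases "w = x \<or> w = y")
    case True
    then obtain o' where o: "(w = x \<and> o' = y) \<or> (w = y \<and> o' = x)" by blast
    have "o' \<notin> nbrs E w" using o nin by (auto simp: nbrs_def adj_def insert_commute)
    moreover have "a \<in> nbrs E w" using aw True by auto
    moreover have "nbrs (contract a E) w = insert o' (nbrs E w - {a})"
      using nbrs_contract[OF N w(2)] o N(2) by auto
    ultimately show ?thesis using card_swap[OF fin] by simp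
  next
    case False
    then have "nbrs (contract a E) w = nbrs E w" using nbrs_contract[OF N w(2)] aw by auto
    then show ?thesis by simp
  qed
qed

lemma contract_subdiv: assumes "wfE V E" "a \<notin> V" "e \<in> E"
  shows "contract a (subdiv a e E) = E"
proof -
  have "delv a (subdiv a e E) = E - {e}"
    using assms wfE_sub unfolding delv_def subdiv_def by auto
  then show ?thesis using nbrs_subdiv_a[OF assms] assms(3) by (auto simp: contract_def)
qed

lemma subdiv_contract: assumes T: "is_tree V E" and aV: "a \<in> V" and N: "nbrs E a = {x,y}" "x \<noteq> y"
  shows "subdiv a (nbrs E a) (contract a E) = E"
proof -
  have nin: "{x,y} \<notin> E" using tree_contract[OF T aV N] by blast
  have EA: "{e\<in>E. a\<in>e} = (\<lambda>z. {a,z}) ` nbrs E a" using edges_at tree_wf[OF T] by blast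
  have "nbrs E a \<notin> delv a E" using N nin by (auto simp: delv_def)
  then have "subdiv a (nbrs E a) (contract a E) = (\<lambda>z. {a,z}) ` nbrs E a \<union> delv a E"
    by (auto simp: subdiv_def contract_def)
  also have "\<dots> = E" using EA by (auto simp: delv_def)
  finally show ?thesis .
qed

lemma Vdel: "a \<in> V \<Longrightarrow> insert a (V - {a}) = V" by auto

lemma deg2_bij:
  assumes fin: "finite V" and aV: "a \<in> V" and aL: "a \<notin> L"
  shows "bij_betw (\<lambda>(E',e). subdiv a e E') (SIGMA E':trees L (V-{a}). E')
           {E \<in> trees (insert a L) V. deg E a = 2}"
proof (rule bij_betw_byWitness[where f'="\<lambda>E. (contract a E, nbrs E a)"])
  show "\<forall>p\<in>(SIGMA E':trees L (V-{a}). E'). (\<lambda>E. (contract a E, nbrs E a)) ((\<lambda>(E',e). subdiv a e E') p) = p"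
  proof
    fix p assume "p \<in> (SIGMA E':trees L (V-{a}). E')"
    then obtain E' e where p: "p = (E',e)" "is_tree (V-{a}) E'" "e \<in> E'" by (auto simp: trees_def)
    have wf: "wfE (V-{a}) E'" using p tree_wf by blast
    show "(\<lambda>E. (contract a E, nbrs E a)) ((\<lambda>(E',e). subdiv a e E') p) = p"
      using p contract_subdiv[OF wf _ p(3)] nbrs_subdiv_a[OF wf _ p(3)] by auto
  qed
  show "\<forall>E\<in>{E \<in> trees (insert a L) V. deg E a = 2}. (\<lambda>(E',e). subdiv a e E') (contract a E, nbrs E a) = E"
  proof
    fix E assume E: "E \<in> {E \<in> trees (insert a L) V. deg E a = 2}"
    then have T: "is_tree V E" and d: "card (nbrs E a) = 2" by (auto simp: trees_def tree_deg)
    then obtain x y where "nbrs E a = {x,y}" "x \<noteq> y" by (auto simp: card_2_iff)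
    then show "(\<lambda>(E',e). subdiv a e E') (contract a E, nbrs E a) = E"
      using subdiv_contract[OF T aV] by auto
  qed
  show "(\<lambda>(E',e). subdiv a e E') ` (SIGMA E':trees L (V-{a}). E') \<subseteq> {E \<in> trees (insert a L) V. deg E a = 2}"
  proof clarify
    fix E' e assume E': "E' \<in> trees L (V-{a})" and e: "e \<in> E'"
    have T: "is_tree (V-{a}) E'" using E' by (simp add: trees_def)
    have wf: "wfE (V-{a}) E'" using T tree_wf by blast
    have T2: "is_tree V (subdiv a e E')" using tree_subdiv[OF T e, of a] Vdel[OF aV] by simp
    have "card e = 2" using wf e unfolding wfE_def by auto
    then have da: "deg (subdiv a e E') a = 2" using tree_deg[OF T2] nbrs_subdiv_a[OF wf _ e] by simp
    have "deg (subdiv a e E') v \<ge> 3" if "v \<in> V - insert a L" for v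
    proof -
      have "v \<in> V - {a}" "v \<in> (V - {a}) - L" using that by auto
      then show ?thesis using E' card_nbrs_subdiv[OF T _ e] tree_deg[OF T2] tree_deg[OF T]
        by (auto simp: trees_def)
    qed
    then show "subdiv a e E' \<in> trees (insert a L) V \<and> deg (subdiv a e E') a = 2"
      using T2 da by (auto simp: trees_def)
  qed
  show "(\<lambda>E. (contract a E, nbrs E a)) ` {E \<in> trees (insert a L) V. deg E a = 2} \<subseteq> (SIGMA E':trees L (V-{a}). E')"
  proof clarify
    fix E assume E: "E \<in> trees (insert a L) V" "deg E a = 2"
    then have T: "is_tree V E" and d: "card (nbrs E a) = 2" by (auto simp: trees_def tree_deg)
    then obtain x y where N: "nbrs E a = {x,y}" "x \<noteq> y" by (auto simp: card_2_iff)
    have T2: "is_tree (V-{a}) (contract a E)" using tree_contract[OF T aV N] by blast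
    have "deg (contract a E) v \<ge> 3" if "v \<in> (V - {a}) - L" for v
      using that E card_nbrs_contract[OF T aV N, of v] tree_deg[OF T2] tree_deg[OF T]
      by (auto simp: trees_def)
    then show "contract a E \<in> trees L (V - {a}) \<and> nbrs E a \<in> contract a E"
      using T2 by (auto simp: trees_def contract_def)
  qed
qed

lemma card_deg2:
  assumes fin: "finite V" and aV: "a \<in> V" and aL: "a \<notin> L"
  shows "card {E \<in> trees (insert a L) V. deg E a = 2} = card (trees L (V-{a})) * (card V - 2)"
proof -
  have "card {E \<in> trees (insert a L) V. deg E a = 2} = card (SIGMA E':trees L (V-{a}). E')"
    using bij_betw_same_card[OF deg2_bij[OF assms]] by simp
  also have "\<dots> = (\<Sum>E'\<in>trees L (V-{a}). card E')"
    using finite_trees[of "V-{a}" L] fin tree_finE by (auto simp: trees_def intro!: card_SigmaI)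
  also have "\<dots> = (\<Sum>E'\<in>trees L (V-{a}). card V - 2)"
    by (rule sum.cong) (use aV fin in \<open>auto simp: trees_def tree_cardE\<close>)
  finally show ?thesis by simp
qed

lemma deg1_bij:
  assumes fin: "finite V" and aV: "a \<in> V" and aL: "a \<notin> L"
  shows "bij_betw (\<lambda>(E',r). insert {a,r} E') (rtrees L (V-{a}))
           {E \<in> trees (insert a L) V. deg E a = 1}"
proof (rule bij_betw_byWitness[where f'="\<lambda>E. (delv a E, the_elem (nbrs E a))"])
  show "\<forall>p\<in>rtrees L (V-{a}). (\<lambda>E. (delv a E, the_elem (nbrs E a))) ((\<lambda>(E',r). insert {a,r} E') p) = p"
  proof
    fix p assume "p \<in> rtrees L (V-{a})"
    then obtain E' r where p: "p = (E',r)" "is_tree (V-{a}) E'" "r \<in> V - {a}" by (auto simp: rtrees_def trees_def)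
    have wf: "wfE (V-{a}) E'" using p tree_wf by blast
    have d: "delv a (insert {a,r} E') = E'" using delv_noa[OF wf] by (auto simp: delv_def)
    have "adj E' a z \<longleftrightarrow> False" for z using adj_in[OF wf] by auto
    then have "nbrs (insert {a,r} E') a = {r}" using p(3) by (auto simp: nbrs_def adj_insert doubleton_eq_iff)
    then show "(\<lambda>E. (delv a E, the_elem (nbrs E a))) ((\<lambda>(E',r). insert {a,r} E') p) = p"
      using p d by simp
  qed
  show "\<forall>E\<in>{E \<in> trees (insert a L) V. deg E a = 1}. (\<lambda>(E',r). insert {a,r} E') (delv a E, the_elem (nbrs E a)) = E"
  proof
    fix E assume E: "E \<in> {E \<in> trees (insert a L) V. deg E a = 1}"
    then have T: "is_tree V E" and d: "card (nbrs E a) = 1" by (auto simp: trees_def tree_deg)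
    then obtain r where N: "nbrs E a = {r}" by (auto simp: card_1_singleton_iff)
    have EA: "{e\<in>E. a\<in>e} = {{a,r}}" using edges_at[OF tree_wf[OF T], of a] N by simp
    then show "(\<lambda>(E',r). insert {a,r} E') (delv a E, the_elem (nbrs E a)) = E"
      using N by (auto simp: delv_def)
  qed
  show "(\<lambda>(E',r). insert {a,r} E') ` rtrees L (V-{a}) \<subseteq> {E \<in> trees (insert a L) V. deg E a = 1}"
  proof clarify
    fix E' r assume R: "(E',r) \<in> rtrees L (V-{a})"
    then have T: "is_tree (V-{a}) E'" and rV: "r \<in> V - {a}" and E': "E' \<in> trees (insert r L) (V-{a})"
      and rc: "r \<in> L \<or> deg E' r \<ge> 2" by (auto simp: rtrees_def trees_def)
    have wf: "wfE (V-{a}) E'" using T tree_wf by blast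
    have T2: "is_tree V (insert {a,r} E')" using tree_leaf_add[OF T _ rV, of a] Vdel[OF aV] by simp
    have "adj E' a z \<longleftrightarrow> False" for z using adj_in[OF wf] by auto
    then have Na: "nbrs (insert {a,r} E') a = {r}" using rV by (auto simp: nbrs_def adj_insert doubleton_eq_iff)
    have anr: "a \<notin> nbrs E' r" using nbrs_sub[OF wf] by auto
    have "deg (insert {a,r} E') v \<ge> 3" if v: "v \<in> V - insert a L" for v
    proof (cases "v = r")
      case True
      then have "deg (insert {a,r} E') v = deg E' r + 1"
        using tree_deg[OF T2] tree_deg[OF T] nbrs_insert_edge[of a r E'] rV anr tree_nbrs_fin[OF T]
        by simp
      moreover have "deg E' r \<ge> 2" using rc v True by auto
      ultimately show ?thesis by simp
    next
      case False
      then have "deg (insert {a,r} E') v = deg E' v"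
        using tree_deg[OF T2] tree_deg[OF T] nbrs_insert_other[of v "{a,r}" E'] v by simp
      moreover have "v \<in> (V - {a}) - insert r L" using v False by auto
      ultimately show ?thesis using E' by (auto simp: trees_def)
    qed
    then show "insert {a,r} E' \<in> trees (insert a L) V \<and> deg (insert {a,r} E') a = 1"
      using T2 Na tree_deg[OF T2] by (auto simp: trees_def)
  qed
  show "(\<lambda>E. (delv a E, the_elem (nbrs E a))) ` {E \<in> trees (insert a L) V. deg E a = 1} \<subseteq> rtrees L (V-{a})"
  proof clarify
    fix E assume E: "E \<in> trees (insert a L) V" "deg E a = 1"
    then have T: "is_tree V E" and d: "card (nbrs E a) = 1" by (auto simp: trees_def tree_deg)
    then obtain r where N: "nbrs E a = {r}" by (auto simp: card_1_singleton_iff)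
    have T2: "is_tree (V-{a}) (delv a E)" using tree_leaf_remove[OF T aV N] .
    have rV: "r \<in> V - {a}" using N nbrs_sub[OF tree_wf[OF T]] nbrs_not_self[of a E] by auto
    have ain: "a \<in> nbrs E v \<longleftrightarrow> v = r" for v using N adj_sym by (auto simp: nbrs_def)
    have "deg (delv a E) v \<ge> 3" if v: "v \<in> (V-{a}) - insert r L" for v
    proof -
      have "nbrs (delv a E) v = nbrs E v" using nbrs_delv[of v a E] ain[of v] v by auto
      then show ?thesis using tree_deg[OF T2] tree_deg[OF T] E v by (auto simp: trees_def)
    qed
    moreover have "r \<in> L \<or> deg (delv a E) r \<ge> 2"
    proof (cases "r \<in> L")
      case False
      then have "card (nbrs E r) \<ge> 3" using E rV tree_deg[OF T] by (auto simp: trees_def)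
      moreover have "nbrs (delv a E) r = nbrs E r - {a}" using nbrs_delv[of r a E] rV by auto
      ultimately show ?thesis using ain[of r] tree_nbrs_fin[OF T] tree_deg[OF T2] by (simp; linarith)
    qed simp
    ultimately show "(delv a E, the_elem (nbrs E a)) \<in> rtrees L (V-{a})"
      using T2 rV N by (auto simp: rtrees_def trees_def)
  qed
qed

lemma tree_nbrs_ne: assumes T: "is_tree V E" and aV: "a \<in> V" and c: "card V \<ge> 2"
  shows "deg E a \<ge> 1"
proof -
  have "V - {a} \<noteq> {}"
  proof
    assume "V - {a} = {}"
    then have "V \<subseteq> {a}" by blast
    then have "card V \<le> 1" using card_mono[of "{a}" V] by simp
    then show False using c by simp
  qed
  then obtain w where "w \<in> V" "w \<noteq> a" by blast
  then have "nbrs E a \<noteq> {}" using tree_card_ge2[OF T aV] by blast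
  then show ?thesis using tree_deg[OF T] tree_nbrs_fin[OF T]
    by (simp add: Suc_leI card_gt_0_iff)
qed

lemma card_trees_split:
  assumes fin: "finite V" and aV: "a \<in> V" and aL: "a \<notin> L" and c: "card V \<ge> 2"
  shows "card (trees (insert a L) V) = card (trees L V) + card (rtrees L (V-{a}))
           + card (trees L (V-{a})) * (card V - 2)"
proof -
  let ?S1 = "{E \<in> trees (insert a L) V. deg E a = 1}"
  let ?S2 = "{E \<in> trees (insert a L) V. deg E a = 2}"
  have eq: "trees (insert a L) V = (trees L V \<union> ?S1) \<union> ?S2"
  proof
    show "trees (insert a L) V \<subseteq> (trees L V \<union> ?S1) \<union> ?S2"
    proof
      fix E assume E: "E \<in> trees (insert a L) V"
      then have d1: "deg E a \<ge> 1" using tree_nbrs_ne[OF _ aV c] by (auto simp: trees_def)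
      have "deg E a \<ge> 3 \<Longrightarrow> E \<in> trees L V" using E aV by (auto simp: trees_def)
      moreover have "deg E a = 1 \<or> deg E a = 2 \<or> deg E a \<ge> 3" using d1 by arith
      ultimately show "E \<in> (trees L V \<union> ?S1) \<union> ?S2" using E by blast
    qed
    show "(trees L V \<union> ?S1) \<union> ?S2 \<subseteq> trees (insert a L) V" by (auto simp: trees_def)
  qed
  have d3: "E \<in> trees L V \<Longrightarrow> deg E a \<ge> 3" for E using aV aL by (auto simp: trees_def)
  have fins: "finite (trees L V)" "finite ?S1" "finite ?S2" using finite_trees[OF fin] by auto
  have dj1: "trees L V \<inter> ?S1 = {}" using d3 by fastforce
  have dj2: "(trees L V \<union> ?S1) \<inter> ?S2 = {}" using d3 by fastforce
  have "card (trees (insert a L) V) = card ((trees L V \<union> ?S1) \<union> ?S2)"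
    by (rule arg_cong[OF eq])
  also have "\<dots> = card (trees L V \<union> ?S1) + card ?S2"
    using fins dj2 by (simp add: card_Un_disjoint)
  also have "card (trees L V \<union> ?S1) = card (trees L V) + card ?S1"
    using fins dj1 by (simp add: card_Un_disjoint)
  also have "card ?S1 = card (rtrees L (V-{a}))" using bij_betw_same_card[OF deg1_bij[OF fin aV aL]] by simp
  also have "card ?S2 = card (trees L (V-{a})) * (card V - 2)" using card_deg2[OF fin aV aL] .
  finally show ?thesis .
qed

lemma card_rtrees:
  assumes fin: "finite V" and LV: "L \<subseteq> V"
  shows "card (rtrees L V) = card L * card (trees L V)
           + (\<Sum>r\<in>V-L. card (trees L V) + card (trees L (V-{r})) * (card V - 2))"
proof -
  define R where "R r = {E \<in> trees (insert r L) V. r \<in> L \<or> deg E r \<ge> 2}" for r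
  have "rtrees L V = (\<lambda>(r,E). (E,r)) ` (SIGMA r:V. R r)"
  proof
    show "rtrees L V \<subseteq> (\<lambda>(r,E). (E,r)) ` (SIGMA r:V. R r)"
    proof clarify
      fix E r assume "(E,r) \<in> rtrees L V"
      then have "(r,E) \<in> (SIGMA r:V. R r)" by (auto simp: rtrees_def R_def)
      then show "(E,r) \<in> (\<lambda>(r,E). (E,r)) ` (SIGMA r:V. R r)" by (rule rev_image_eqI) simp
    qed
    show "(\<lambda>(r,E). (E,r)) ` (SIGMA r:V. R r) \<subseteq> rtrees L V" by (auto simp: rtrees_def R_def)
  qed
  moreover have "inj_on (\<lambda>(r,E). (E,r)) (SIGMA r:V. R r)" by (auto simp: inj_on_def)
  ultimately have "card (rtrees L V) = card (SIGMA r:V. R r)" by (simp add: card_image)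
  also have "\<dots> = (\<Sum>r\<in>V. card (R r))"
    using fin finite_trees[OF fin] by (intro card_SigmaI) (auto simp: R_def)
  also have "\<dots> = (\<Sum>r\<in>L. card (R r)) + (\<Sum>r\<in>V-L. card (R r))"
    using sum.subset_diff[OF LV fin] by (simp add: add.commute)
  also have "(\<Sum>r\<in>L. card (R r)) = card L * card (trees L V)"
  proof -
    have "R r = trees L V" if "r \<in> L" for r using that by (auto simp: R_def insert_absorb)
    then show ?thesis by simp
  qed
  also have "(\<Sum>r\<in>V-L. card (R r)) = (\<Sum>r\<in>V-L. card (trees L V) + card (trees L (V-{r})) * (card V - 2))"
  proof (rule sum.cong[OF refl])
    fix r assume r: "r \<in> V - L"
    let ?S2 = "{E \<in> trees (insert r L) V. deg E r = 2}"
    have d3: "E \<in> trees L V \<Longrightarrow> deg E r \<ge> 3" for E using r by (auto simp: trees_def)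
    have eq: "R r = trees L V \<union> ?S2"
    proof
      show "R r \<subseteq> trees L V \<union> ?S2"
      proof
        fix E assume E: "E \<in> R r"
        then have "deg E r \<ge> 2" using r by (auto simp: R_def)
        moreover have "deg E r \<ge> 3 \<Longrightarrow> E \<in> trees L V" using E by (auto simp: trees_def R_def)
        moreover have "deg E r = 2 \<or> deg E r \<ge> 3" using \<open>deg E r \<ge> 2\<close> by arith
        ultimately show "E \<in> trees L V \<union> ?S2" using E unfolding R_def by blast
      qed
      show "trees L V \<union> ?S2 \<subseteq> R r"
      proof
        fix E assume E: "E \<in> trees L V \<union> ?S2"
        then show "E \<in> R r"
        proof
          assume "E \<in> trees L V" then show ?thesis using d3[of E] by (auto simp: R_def trees_def)
        qed (auto simp: R_def)
      qed
    qed
    have dj: "trees L V \<inter> ?S2 = {}" using d3 by fastforce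
    have "card (R r) = card (trees L V \<union> ?S2)" by (rule arg_cong[OF eq])
    also have "\<dots> = card (trees L V) + card ?S2"
      using finite_trees[OF fin] dj by (simp add: card_Un_disjoint)
    also have "card ?S2 = card (trees L (V-{r})) * (card V - 2)" using card_deg2[OF fin, of r L] r by auto
    finally show "card (R r) = card (trees L V) + card (trees L (V-{r})) * (card V - 2)" .
  qed
  finally show ?thesis .
qed

definition imgE :: "(nat \<Rightarrow> nat) \<Rightarrow> nat set set \<Rightarrow> nat set set" where
  "imgE f E = (\<lambda>e. f ` e) ` E"

lemma adj_imgE: assumes "inj_on f V" "wfE V E" "adj E u w" shows "adj (imgE f E) (f u) (f w)"
proof -
  have "u \<in> V" "w \<in> V" "u \<noteq> w" using adj_in[OF assms(2,3)] assms(3) by (auto simp: adj_def)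
  then have "f u \<noteq> f w" using assms(1) by (auto simp: inj_on_def)
  moreover have "f ` {u,w} \<in> imgE f E" using assms(3) imageI[of "{u,w}" E "image f"]
    unfolding imgE_def adj_def by blast
  ultimately show ?thesis by (simp add: adj_def)
qed

lemma reach_imgE: assumes "inj_on f V" "wfE V E" "reach E u w" shows "reach (imgE f E) (f u) (f w)"
  using assms(3) by induction (auto intro: rtranclp.rtrancl_into_rtrancl adj_imgE[OF assms(1,2)])

lemma nbrs_imgE: assumes inj: "inj_on f V" and wf: "wfE V E" and v: "v \<in> V"
  shows "nbrs (imgE f E) (f v) = f ` nbrs E v"
proof
  show "f ` nbrs E v \<subseteq> nbrs (imgE f E) (f v)" using adj_imgE[OF inj wf] by (auto simp: nbrs_def)
  show "nbrs (imgE f E) (f v) \<subseteq> f ` nbrs E v"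
  proof
    fix z assume "z \<in> nbrs (imgE f E) (f v)"
    then have z: "f v \<noteq> z" "{f v, z} \<in> imgE f E" by (auto simp: nbrs_def adj_def)
    then obtain e where e: "e \<in> E" "{f v, z} = f ` e" by (auto simp: imgE_def)
    then obtain p q where pq: "e = {p,q}" "p \<noteq> q" "p \<in> V" "q \<in> V" using wf unfolding wfE_def by blast
    have "{f v, z} = {f p, f q}" using e pq by auto
    then have "(f v = f p \<and> z = f q) \<or> (f v = f q \<and> z = f p)" by (auto simp: doubleton_eq_iff)
    then have "(v = p \<and> z = f q) \<or> (v = q \<and> z = f p)" using inj v pq by (auto simp: inj_on_def)
    then show "z \<in> f ` nbrs E v" using pq e by (auto simp: nbrs_def adj_def insert_commute)
  qed
qed

lemma tree_imgE: assumes bij: "bij_betw f V V'" and T: "is_tree V E"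
  shows "is_tree V' (imgE f E)" "\<And>v. v \<in> V \<Longrightarrow> deg (imgE f E) (f v) = deg E v"
proof -
  have inj: "inj_on f V" and im: "f ` V = V'" using bij by (auto simp: bij_betw_def)
  have wf: "wfE V E" and fin: "finite V" and c: "conn V E" and ce: "card E + 1 = card V" and ne: "V \<noteq> {}"
    using T by (auto simp: is_tree_def2)
  have wf2: "wfE V' (imgE f E)"
    unfolding wfE_def imgE_def
  proof
    fix e' assume "e' \<in> (\<lambda>e. f ` e) ` E"
    then obtain e where "e \<in> E" "e' = f ` e" by auto
    then obtain u v where "e = {u,v}" "u \<noteq> v" "u \<in> V" "v \<in> V" using wf unfolding wfE_def by blast
    then show "\<exists>u v. e' = {u, v} \<and> u \<noteq> v \<and> u \<in> V' \<and> v \<in> V'"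
      using \<open>e' = f ` e\<close> inj im by (intro exI[of _ "f u"] exI[of _ "f v"]) (auto simp: inj_on_def)
  qed
  have c2: "conn V' (imgE f E)"
    unfolding conn_def using c im reach_imgE[OF inj wf] by (auto simp: conn_def)
  have "inj_on (image f) E" using inj_on_image_Pow[OF inj] wfE_sub[OF wf] inj_on_subset by blast
  then have "card (imgE f E) = card E" by (simp add: imgE_def card_image)
  moreover have "card V' = card V" using bij bij_betw_same_card by metis
  ultimately show "is_tree V' (imgE f E)" using wf2 c2 ce fin ne im by (auto simp: is_tree_def2)
  show "deg (imgE f E) (f v) = deg E v" if "v \<in> V" for v
  proof -
    have "deg (imgE f E) (f v) = card (nbrs (imgE f E) (f v))" using deg_nbrs wf2 by blast
    also have "\<dots> = card (f ` nbrs E v)" using nbrs_imgE[OF inj wf that] by simp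
    also have "\<dots> = card (nbrs E v)" using inj nbrs_sub[OF wf] by (meson card_image inj_on_subset)
    finally show ?thesis using deg_nbrs[OF wf] by simp
  qed
qed

lemma trees_imgE: assumes bij: "bij_betw f V V'" and E: "E \<in> trees L V" and LV: "L \<subseteq> V"
  shows "imgE f E \<in> trees (f ` L) V'"
proof -
  have T: "is_tree V E" using E by (simp add: trees_def)
  have inj: "inj_on f V" and im: "f ` V = V'" using bij by (auto simp: bij_betw_def)
  have "deg (imgE f E) v' \<ge> 3" if v'V: "v' \<in> V' - f ` L" for v'
  proof -
    obtain v where v: "v \<in> V" "v' = f v" using v'V im by auto
    then have "v \<notin> L" using v'V by auto
    then show ?thesis using tree_imgE(2)[OF bij T v(1)] E v by (auto simp: trees_def)
  qed
  then show ?thesis using tree_imgE(1)[OF bij T] by (simp add: trees_def)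
qed

lemma card_trees_le: assumes bij: "bij_betw f V V'" and LV: "L \<subseteq> V" and fin: "finite V'"
  shows "card (trees L V) \<le> card (trees (f ` L) V')"
proof (rule card_inj_on_le)
  have inj: "inj_on f V" using bij by (auto simp: bij_betw_def)
  have "inj_on (image (image f)) (Pow (Pow V))" using inj_on_image_Pow[OF inj_on_image_Pow[OF inj]] .
  moreover have "trees L V \<subseteq> Pow (Pow V)" using wfE_sub tree_wf by (auto simp: trees_def)
  ultimately show "inj_on (imgE f) (trees L V)" unfolding imgE_def by (meson inj_on_subset)
  show "imgE f ` trees L V \<subseteq> trees (f ` L) V'" using trees_imgE[OF bij _ LV] by auto
  show "finite (trees (f ` L) V')" using finite_trees[OF fin] .
qed

lemma card_trees_bij: assumes bij: "bij_betw f V V'" and LV: "L \<subseteq> V" and fin: "finite V"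
  shows "card (trees L V) = card (trees (f ` L) V')"
proof -
  have fin': "finite V'" using bij fin bij_betw_finite by blast
  let ?g = "inv_into V f"
  have bij': "bij_betw ?g V' V" using bij_betw_inv_into[OF bij] .
  have "?g ` f ` L = L" using bij LV by (meson bij_betw_imp_inj_on inv_into_image_cancel)
  moreover have "f ` L \<subseteq> V'" using bij LV by (auto simp: bij_betw_def)
  ultimately have "card (trees (f ` L) V') \<le> card (trees L V)"
    using card_trees_le[OF bij' _ fin] by metis
  then show ?thesis using card_trees_le[OF bij LV fin'] by simp
qed

definition tc :: "nat \<Rightarrow> nat \<Rightarrow> nat" where "tc l u = card (trees {0..<l} {0..<l+u})"

lemma card_trees_tc: assumes fin: "finite V" and LV: "L \<subseteq> V"
  shows "card (trees L V) = tc (card L) (card (V - L))"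
proof -
  define l where "l = card L"
  define u where "u = card (V - L)"
  have finL: "finite L" using fin LV finite_subset by blast
  have c1: "card L = card {0..<l}" by (simp add: l_def)
  obtain h1 where h1: "bij_betw h1 L {0..<l}" using finite_same_card_bij[OF finL _ c1] by blast
  have finVL: "finite (V - L)" using fin by blast
  have c2: "card (V - L) = card {l..<l+u}" by (simp add: u_def)
  obtain h2 where h2: "bij_betw h2 (V - L) {l..<l+u}" using finite_same_card_bij[OF finVL _ c2] by blast
  define f where "f x = (if x \<in> L then h1 x else h2 x)" for x
  have "bij_betw f L {0..<l} = bij_betw h1 L {0..<l}" by (rule bij_betw_cong) (simp add: f_def)
  then have b1: "bij_betw f L {0..<l}" using h1 by simp
  have "bij_betw f (V - L) {l..<l+u} = bij_betw h2 (V - L) {l..<l+u}" by (rule bij_betw_cong) (simp add: f_def)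
  then have b2: "bij_betw f (V - L) {l..<l+u}" using h2 by simp
  have "bij_betw f (L \<union> (V - L)) ({0..<l} \<union> {l..<l+u})" using bij_betw_combine[OF b1 b2] by auto
  moreover have "L \<union> (V - L) = V" using LV by auto
  moreover have "{0..<l} \<union> {l..<l+u} = {0..<l+u}" by auto
  ultimately have bij: "bij_betw f V {0..<l+u}" by simp
  have "f ` L = {0..<l}" using b1 by (simp add: bij_betw_def)
  then show ?thesis using card_trees_bij[OF bij LV fin] by (simp add: tc_def l_def u_def)
qed

lemma tree_card_pos: "is_tree V E \<Longrightarrow> card V \<ge> 1"
  unfolding is_tree_def2 by auto

lemma handshake: assumes fin: "finite V" and wf: "wfE V E"
  shows "(\<Sum>v\<in>V. deg E v) = 2 * card E"
proof -
  have finE: "finite E" using wfE_finite[OF fin wf] .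
  have "(\<Sum>v\<in>V. deg E v) = (\<Sum>v\<in>V. \<Sum>e\<in>E. if v \<in> e then 1 else 0)"
    unfolding deg_def by (rule sum.cong[OF refl]) (simp add: sum.inter_filter[OF finE, symmetric])
  also have "\<dots> = (\<Sum>e\<in>E. \<Sum>v\<in>V. if v \<in> e then 1 else 0)" by (rule sum.swap)
  also have "\<dots> = (\<Sum>e\<in>E. (2::nat))"
  proof (rule sum.cong[OF refl])
    fix e assume e: "e \<in> E"
    then obtain u w where "e = {u,w}" "u \<noteq> w" "u \<in> V" "w \<in> V" using wf unfolding wfE_def by blast
    then have "{v\<in>V. v \<in> e} = e" "card e = 2" by auto
    then show "(\<Sum>v\<in>V. if v \<in> e then 1 else 0) = (2::nat)"
      using sum.inter_filter[OF fin, of "\<lambda>_. 1::nat" "\<lambda>v. v \<in> e"] by simp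
  qed
  finally show ?thesis by simp
qed

lemma leaf_exists: assumes T: "is_tree V E" and c: "card V \<ge> 2" shows "\<exists>l\<in>V. deg E l = 1"
proof (rule ccontr)
  assume "\<not> ?thesis"
  then have "\<forall>v\<in>V. deg E v \<ge> 2" using tree_nbrs_ne[OF T _ c] by (metis One_nat_def Suc_1 Suc_le_eq le_neq_implies_less)
  then have "(\<Sum>v\<in>V. 2) \<le> (\<Sum>v\<in>V. deg E v)" by (intro sum_mono) auto
  then have "2 * card V \<le> 2 * card E" using handshake[OF tree_fin[OF T] tree_wf[OF T]] by simp
  then show False using T by (simp add: is_tree_def2)
qed

lemma trees_bound: assumes E: "E \<in> trees L V" and LV: "L \<subseteq> V"
  shows "card (V - L) \<le> card L"
proof -
  have T: "is_tree V E" using E by (simp add: trees_def)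
  have fin: "finite V" using tree_fin[OF T] .
  show ?thesis
  proof (cases "card V \<ge> 2")
    case True
    have s: "(\<Sum>v\<in>V. deg E v) = (\<Sum>v\<in>L. deg E v) + (\<Sum>v\<in>V-L. deg E v)"
      using sum.subset_diff[OF LV fin] by (simp add: add.commute)
    have "(\<Sum>v\<in>L. 1) \<le> (\<Sum>v\<in>L. deg E v)" using tree_nbrs_ne[OF T _ True] LV by (intro sum_mono) auto
    moreover have "(\<Sum>v\<in>V-L. 3) \<le> (\<Sum>v\<in>V-L. deg E v)" using E by (intro sum_mono) (auto simp: trees_def)
    moreover have "card V = card L + card (V - L)" using LV fin
      by (metis card_Diff_subset card_mono finite_subset le_add_diff_inverse)
    ultimately have "card L + 3 * card (V - L) \<le> 2 * card E"
      using handshake[OF fin tree_wf[OF T]] s by simp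
    moreover have "card E + 1 = card V" using T by (simp add: is_tree_def2)
    ultimately show ?thesis using \<open>card V = card L + card (V - L)\<close> by linarith
  next
    case False
    then have cV: "card V = 1" using tree_card_pos[OF T] by arith
    then obtain v where V: "V = {v}" by (auto simp: card_1_singleton_iff)
    have "card E = 0" using T cV by (simp add: is_tree_def2)
    then have "E = {}" using tree_finE[OF T] by simp
    then have "deg E v = 0" by (simp add: deg_def)
    then have "v \<in> L" using E V by (auto simp: trees_def)
    then show ?thesis using V by simp
  qed
qed

lemma tc_zero: assumes "l < u" shows "tc l u = 0"
proof -
  have "trees {0..<l} {0..<l+u} = {}"
  proof (rule ccontr)
    assume "trees {0..<l} {0..<l+u} \<noteq> {}"
    then obtain E where "E \<in> trees {0..<l} {0..<l+u}" by blast
    then have "card ({0..<l+u} - {0..<l}) \<le> card {0..<l}" by (rule trees_bound) auto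
    then show False using assms by simp
  qed
  then show ?thesis by (simp add: tc_def)
qed

lemma tc_1_0: "tc 1 0 = 1"
proof -
  have "trees {0..<1} {0..<1+0} = {{}}"
  proof
    show "{{}} \<subseteq> trees {0..<1} {0..<1+0}"
      by (simp add: trees_def is_tree_def2 wfE_def conn_def)
    show "trees {0..<1} {0..<1+0} \<subseteq> {{}}"
    proof
      fix E assume "E \<in> trees {0..<1} {0..<1+0}"
      then have T: "is_tree {0..<1+0} E" by (simp add: trees_def)
      then have "card E = 0" "finite E" using tree_cardE[OF T] tree_finE[OF T] by auto
      then show "E \<in> {{}}" by simp
    qed
  qed
  then show ?thesis by (simp add: tc_def)
qed

definition rc :: "nat \<Rightarrow> nat \<Rightarrow> nat" where
  "rc l u = l * tc l u + u * (tc l u + tc l (u - 1) * (l + u - 2))"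

lemma card_rtrees_rc: assumes fin: "finite V" and LV: "L \<subseteq> V"
  shows "card (rtrees L V) = rc (card L) (card (V - L))"
proof -
  have cV: "card V = card L + card (V - L)" using LV fin
    by (metis card_Diff_subset card_mono finite_subset le_add_diff_inverse)
  have "(\<Sum>r\<in>V-L. card (trees L V) + card (trees L (V-{r})) * (card V - 2))
      = (\<Sum>r\<in>V-L. tc (card L) (card (V - L)) + tc (card L) (card (V - L) - 1) * (card V - 2))"
  proof (rule sum.cong[OF refl])
    fix r assume r: "r \<in> V - L"
    have "V - {r} - L = (V - L) - {r}" by auto
    then have "card (V - {r} - L) = card (V - L) - 1" using r fin by simp
    then show "card (trees L V) + card (trees L (V-{r})) * (card V - 2)
        = tc (card L) (card (V - L)) + tc (card L) (card (V - L) - 1) * (card V - 2)"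
      using card_trees_tc[OF fin LV] card_trees_tc[of "V - {r}" L] fin LV r by auto
  qed
  then show ?thesis using card_rtrees[OF fin LV] card_trees_tc[OF fin LV] cV
    by (simp add: rc_def)
qed

lemma tc_rec: assumes l: "l \<ge> 1"
  shows "tc (l+1) u = tc l (u+1) + rc l u + tc l u * (l + u - 1)"
proof -
  define V where "V = {0..<l+1+u}"
  define L where "L = {0..<l::nat}"
  have fin: "finite V" by (simp add: V_def)
  have aV: "l \<in> V" "l \<notin> L" by (auto simp: V_def L_def)
  have c: "card V \<ge> 2" using l by (simp add: V_def)
  have LV: "L \<subseteq> V" "L \<subseteq> V - {l}" by (auto simp: V_def L_def)
  have "card (trees (insert l L) V) = card (trees L V) + card (rtrees L (V-{l}))
           + card (trees L (V-{l})) * (card V - 2)" by (rule card_trees_split[OF fin aV c])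
  moreover have "insert l L = {0..<l+1}" by (auto simp: L_def)
  moreover have "card (trees L V) = tc l (u+1)"
    using card_trees_tc[OF fin LV(1)] by (simp add: V_def L_def)
  moreover have "V - {l} - L = {l+1..<l+1+u}" by (auto simp: V_def L_def)
  moreover then have "card (trees L (V - {l})) = tc l u"
    using card_trees_tc[of "V - {l}" L] fin LV(2) by (simp add: L_def)
  moreover have "card (rtrees L (V-{l})) = rc l u"
    using card_rtrees_rc[of "V - {l}" L] fin LV(2) \<open>V - {l} - L = {l+1..<l+1+u}\<close> by (simp add: L_def)
  ultimately show ?thesis by (simp add: V_def tc_def)
qed

lemma tree_aut:
  assumes "is_tree V E" "bij_betw g V V" "imgE g E = E" "\<forall>v\<in>V. deg E v \<le> 1 \<longrightarrow> g v = v"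
  shows "\<forall>v\<in>V. g v = v"
  using assms
proof (induction "card V" arbitrary: V E rule: less_induct)
  case less
  note T = less.prems(1) and bij = less.prems(2) and im = less.prems(3) and fx = less.prems(4)
  have inj: "inj_on g V" and gV: "g ` V = V" using bij by (auto simp: bij_betw_def)
  have wf: "wfE V E" using tree_wf[OF T] .
  show ?case
  proof (cases "card V \<ge> 2")
    case False
    then have "card V = 1" using tree_card_pos[OF T] by arith
    then obtain v where V: "V = {v}" by (auto simp: card_1_singleton_iff)
    then show ?thesis using gV by auto
  next
    case True
    obtain l where lV: "l \<in> V" and dl: "deg E l = 1" using leaf_exists[OF T True] by blast
    then obtain v where N: "nbrs E l = {v}" using tree_deg[OF T] by (auto simp: card_1_singleton_iff)
    have gl: "g l = l" using fx lV dl by auto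
    have vV: "v \<in> V" "v \<noteq> l" using N nbrs_sub[OF wf] nbrs_not_self[of l E] by auto
    have "g v = v"
    proof -
      have "{l,v} \<in> E" using N by (auto simp: nbrs_def adj_def)
      then have "g ` {l,v} \<in> imgE g E" unfolding imgE_def by (rule imageI)
      then have "{l, g v} \<in> E" using im gl by simp
      moreover have "g v \<noteq> l" using inj_onD[OF inj, of v l] gl vV lV by auto
      ultimately have "g v \<in> nbrs E l" by (auto simp: nbrs_def adj_def)
      then show ?thesis using N by simp
    qed
    define V' where "V' = V - {l}"
    define E' where "E' = delv l E"
    have T': "is_tree V' E'" unfolding V'_def E'_def by (rule tree_leaf_remove[OF T lV N])
    have bij': "bij_betw g V' V'"
    proof -
      have "inj_on g V'" using inj unfolding V'_def by (meson Diff_subset inj_on_subset)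
      moreover have "g ` V' = V'" unfolding V'_def
        using inj_on_image_set_diff[OF inj, of V "{l}"] gV gl lV by simp
      ultimately show ?thesis by (simp add: bij_betw_def)
    qed
    have lnot: "l \<notin> g ` e" if "e \<in> E" "l \<notin> e" for e
    proof
      assume "l \<in> g ` e"
      then obtain x where "x \<in> e" "g x = l" by auto
      moreover have "e \<subseteq> V" using that wfE_sub[OF wf] by auto
      ultimately show False using inj_onD[OF inj, of x l] gl lV that(2) by auto
    qed
    have im': "imgE g E' = E'"
    proof
      show "imgE g E' \<subseteq> E'"
      proof
        fix e' assume "e' \<in> imgE g E'"
        then obtain e where e: "e \<in> E" "l \<notin> e" "e' = g ` e" by (auto simp: imgE_def E'_def delv_def)
        then have "e' \<in> imgE g E" by (auto simp: imgE_def)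
        then show "e' \<in> E'" using im e lnot by (auto simp: E'_def delv_def)
      qed
      show "E' \<subseteq> imgE g E'"
      proof
        fix e assume e: "e \<in> E'"
        then have "e \<in> imgE g E" using im by (simp add: E'_def delv_def)
        then obtain e0 where e0: "e0 \<in> E" "e = g ` e0" by (auto simp: imgE_def)
        have "l \<notin> e0" using e e0 gl by (auto simp: E'_def delv_def) (metis imageI)
        then show "e \<in> imgE g E'" using e0 by (auto simp: imgE_def E'_def delv_def)
      qed
    qed
    have fx': "\<forall>w\<in>V'. deg E' w \<le> 1 \<longrightarrow> g w = w"
    proof (intro ballI impI)
      fix w assume w: "w \<in> V'" and d: "deg E' w \<le> 1"
      show "g w = w"
      proof (cases "w = v")
        case True then show ?thesis using \<open>g v = v\<close> by simp
      next
        case False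
        have "l \<notin> nbrs E w" using N False adj_sym by (auto simp: nbrs_def)
        then have "nbrs E' w = nbrs E w" using nbrs_delv[of w l E] w by (auto simp: E'_def V'_def)
        then have "deg E w \<le> 1" using d tree_deg[OF T] tree_deg[OF T'] by simp
        then show ?thesis using fx w by (auto simp: V'_def)
      qed
    qed
    have "card V > 0" using lV tree_fin[OF T] card_gt_0_iff by blast
    then have "card V' < card V" using lV tree_fin[OF T] by (simp add: V'_def)
    then have "\<forall>w\<in>V'. g w = w" using less.hyps T' bij' im' fx' by blast
    then show ?thesis using gl by (auto simp: V'_def)
  qed
qed

lemma coeff_lin: "coeff ([:a,b:] * p) k = a * coeff p k + (if k = 0 then 0 else b * coeff p (k - 1))"
  for p :: "int poly"
  by (cases k) simp_all

lemma coeff_sq: "coeff ([:1,1:]^2 * q) k = coeff q k + 2 * (if k = 0 then 0 else coeff q (k-1))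
     + (if k < 2 then 0 else coeff q (k-2))" for q :: "int poly"
proof -
  have "[:1,1:]^2 * q = [:1,1:] * ([:1,1:] * q)" by (simp only: power2_eq_square mult.assoc)
  then show ?thesis
    by (cases k; cases "k - 1") (simp_all only: coeff_lin, auto)
qed

lemma coeff_step:
  fixes P :: "int poly" and A B :: int and s :: "nat \<Rightarrow> int"
  assumes s: "\<And>i. coeff P i * fact i = s i"
  shows "coeff ([:A,B:] * P + [:1,1:]^2 * pderiv P) k * fact k =
     A * s k + (if k = 0 then 0 else B * int k * s (k-1)) + s (k+1) + 2 * int k * s k
     + (if k = 0 then 0 else int k * (int k - 1) * s (k-1))"
proof -
  have cf: "coeff ([:A,B:] * P + [:1,1:]^2 * pderiv P) k =
     A * coeff P k + (if k = 0 then 0 else B * coeff P (k - 1))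
     + coeff (pderiv P) k + 2 * (if k = 0 then 0 else coeff (pderiv P) (k-1))
     + (if k < 2 then 0 else coeff (pderiv P) (k-2))"
    by (simp only: coeff_add coeff_lin coeff_sq)
  have f1: "fact (Suc i) = (of_nat (Suc i) :: int) * fact i" for i by simp
  show ?thesis
  proof (cases k)
    case 0
    have "coeff P 1 * fact 1 = s 1" by (rule s)
    then show ?thesis using cf s[of 0] 0 by (simp add: coeff_pderiv)
  next
    case (Suc m)
    note k = Suc
    show ?thesis
    proof (cases m)
      case 0
      have "coeff P (Suc (Suc 0)) * fact (Suc (Suc 0)) = s (Suc (Suc 0))" by (rule s)
      then have "2 * coeff P (Suc (Suc 0)) = s (Suc (Suc 0))" by (simp add: algebra_simps)
      then show ?thesis using cf s[of 0] s[of 1] k 0 by (simp add: coeff_pderiv algebra_simps)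
    next
      case (Suc j)
      have k2: "k = Suc (Suc j)" using k Suc by simp
      define c1 where "c1 = coeff P (Suc j)"
      define c2 where "c2 = coeff P (Suc (Suc j))"
      define c3 where "c3 = coeff P (Suc (Suc (Suc j)))"
      define F where "F = (fact (Suc j) :: int)"
      define X where "X = coeff ([:A,B:] * P + [:1,1:]^2 * pderiv P) k"
      have e1: "c1 * F = s (Suc j)" using s[of "Suc j"] by (simp add: c1_def F_def)
      have F2: "fact (Suc (Suc j)) = (of_nat (j+2) :: int) * F" by (simp add: F_def)
      have F3: "fact (Suc (Suc (Suc j))) = (of_nat (j+3) :: int) * (of_nat (j+2) * F)"
        by (simp add: F_def algebra_simps)
      have e2: "c2 * (of_nat (j+2) * F) = s (Suc (Suc j))" unfolding F2[symmetric] c2_def by (rule s)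
      have e3: "c3 * (of_nat (j+3) * (of_nat (j+2) * F)) = s (Suc (Suc (Suc j)))"
        unfolding F3[symmetric] c3_def by (rule s)
      have cf2: "X = A * c2 + B * c1 + of_nat (j+3) * c3 + 2 * (of_nat (j+2) * c2) + of_nat (j+1) * c1"
      proof -
        have "X = A * coeff P k + (if k = 0 then 0 else B * coeff P (k - 1))
           + coeff (pderiv P) k + 2 * (if k = 0 then 0 else coeff (pderiv P) (k-1))
           + (if k < 2 then 0 else coeff (pderiv P) (k-2))" unfolding X_def by (rule cf)
        then show ?thesis unfolding k2 c1_def c2_def c3_def by (simp add: coeff_pderiv algebra_simps)
      qed
      have "X * fact k = A * (c2 * (of_nat (j+2) * F)) + B * of_nat (j+2) * (c1 * F)
         + c3 * (of_nat (j+3) * (of_nat (j+2) * F))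
         + 2 * of_nat (j+2) * (c2 * (of_nat (j+2) * F))
         + of_nat (j+2) * of_nat (j+1) * (c1 * F)"
        unfolding k2 F2 cf2 by (simp add: algebra_simps)
      also have "\<dots> = A * s (Suc (Suc j)) + B * of_nat (j+2) * s (Suc j) + s (Suc (Suc (Suc j)))
         + 2 * of_nat (j+2) * s (Suc (Suc j)) + of_nat (j+2) * of_nat (j+1) * s (Suc j)"
        unfolding e1 e2 e3 ..
      finally show ?thesis using k2 unfolding X_def by (simp add: algebra_simps)
    qed
  qed
qed

lemma H_rec: "n \<ge> 1 \<Longrightarrow> H (n+1) = [:2 * int n - 1, int n - 1:] * H n + [:1,1:]^2 * pderiv (H n)"
  by (cases n) auto
lemma G_rec: "n \<ge> 1 \<Longrightarrow> G (n+1) = [:2 * int n, int n:] * G n + [:1,1:]^2 * pderiv (G n)"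
  by (cases n) auto

lemma trees_bound2: assumes E: "E \<in> trees L V" and LV: "L \<subseteq> V" and c: "card V \<ge> 2"
  shows "card (V - L) + 2 \<le> card L"
proof -
  have T: "is_tree V E" using E by (simp add: trees_def)
  have fin: "finite V" using tree_fin[OF T] .
  have s: "(\<Sum>v\<in>V. deg E v) = (\<Sum>v\<in>L. deg E v) + (\<Sum>v\<in>V-L. deg E v)"
    using sum.subset_diff[OF LV fin] by (simp add: add.commute)
  have "(\<Sum>v\<in>L. 1) \<le> (\<Sum>v\<in>L. deg E v)" using tree_nbrs_ne[OF T _ c] LV by (intro sum_mono) auto
  moreover have "(\<Sum>v\<in>V-L. 3) \<le> (\<Sum>v\<in>V-L. deg E v)" using E by (intro sum_mono) (auto simp: trees_def)
  moreover have cV: "card V = card L + card (V - L)" using LV fin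
    by (metis card_Diff_subset card_mono finite_subset le_add_diff_inverse)
  ultimately have "card L + 3 * card (V - L) \<le> 2 * card E"
    using handshake[OF fin tree_wf[OF T]] s by simp
  moreover have "card E + 1 = card V" using T by (simp add: is_tree_def2)
  ultimately show ?thesis using cV by linarith
qed

lemma tc_zero2: assumes "l + u \<ge> 2" "l < u + 2" shows "tc l u = 0"
proof -
  have "trees {0..<l} {0..<l+u} = {}"
  proof (rule ccontr)
    assume "trees {0..<l} {0..<l+u} \<noteq> {}"
    then obtain E where "E \<in> trees {0..<l} {0..<l+u}" by blast
    then have "card ({0..<l+u} - {0..<l}) + 2 \<le> card {0..<l}" by (rule trees_bound2) (use assms in auto)
    then show False using assms by simp
  qed
  then show ?thesis by (simp add: tc_def)
qed

lemma rc_int: assumes n: "n \<ge> 1"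
  shows "int (rc n k) = (int n + int k) * int (tc n k)
    + (if k = 0 then 0 else int k * (int n + int k - 2) * int (tc n (k-1)))"
proof -
  have e: "int (rc n k) = int n * int (tc n k) + int k * (int (tc n k) + int (tc n (k-1)) * int (n+k-2))"
    unfolding rc_def of_nat_add of_nat_mult ..
  show ?thesis
  proof (cases k)
    case 0 then show ?thesis using e by simp
  next
    case (Suc m)
    have "int (n + k - 2) = int n + int k - 2" using n Suc by auto
    then show ?thesis using e Suc by (simp add: algebra_simps)
  qed
qed

lemma tc_rec_int: assumes n: "n \<ge> 1"
  shows "int (tc (n+1) k) = int (tc n (k+1)) + (2 * int n + 2 * int k - 1) * int (tc n k)
    + (if k = 0 then 0 else int k * (int n + int k - 2) * int (tc n (k-1)))"
proof -
  have h1: "int (n + k - 1) = int n + int k - 1" using n by auto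
  have "int (tc (n+1) k) = int (tc n (k+1)) + int (rc n k) + int (tc n k) * int (n+k-1)"
    unfolding tc_rec[OF n] of_nat_add of_nat_mult ..
  then show ?thesis using rc_int[OF n, of k] h1 by (cases "k = 0") (simp_all add: algebra_simps)
qed

lemma H_coeff: assumes "n \<ge> 1" shows "coeff (H n) k * fact k = int (tc n k)"
  using assms
proof (induction n arbitrary: k rule: dec_induct)
  case base
  show ?case
  proof (cases k)
    case 0 then show ?thesis using tc_1_0 by simp
  next
    case (Suc m) then show ?thesis using tc_zero2[of 1 k] by simp
  qed
next
  case (step n)
  have n: "n \<ge> 1" using step.hyps(1) .
  let ?t = "\<lambda>i. int (tc n i)"
  have "coeff (H (n+1)) k * fact k =
     (2 * int n - 1) * ?t k + (if k = 0 then 0 else (int n - 1) * int k * ?t (k-1)) + ?t (k+1) + 2 * int k * ?t k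
     + (if k = 0 then 0 else int k * (int k - 1) * ?t (k-1))"
    unfolding H_rec[OF n] by (rule coeff_step) (rule step.IH)
  also have "\<dots> = int (tc (n+1) k)"
    unfolding tc_rec_int[OF n] by (cases "k = 0") (simp_all add: algebra_simps)
  finally show ?case by simp
qed

lemma G_coeff: assumes "n \<ge> 1" shows "coeff (G n) k * fact k = int (rc n k)"
  using assms
proof (induction n arbitrary: k rule: dec_induct)
  case base
  show ?case
  proof (cases k)
    case 0 then show ?thesis using tc_1_0 by (simp add: rc_def)
  next
    case (Suc m)
    then show ?thesis using tc_zero2[of 1 k] tc_zero2[of 1 "k-1"] by (cases m) (auto simp: rc_def)
  qed
next
  case (step n)
  have n: "n \<ge> 1" using step.hyps(1) .
  have n1: "n + 1 \<ge> 1" by simp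
  let ?r = "\<lambda>i. int (rc n i)"
  let ?t = "\<lambda>i. int (tc n i)"
  have "coeff (G (n+1)) k * fact k =
     (2 * int n) * ?r k + (if k = 0 then 0 else int n * int k * ?r (k-1)) + ?r (k+1) + 2 * int k * ?r k
     + (if k = 0 then 0 else int k * (int k - 1) * ?r (k-1))"
    unfolding G_rec[OF n] by (rule coeff_step) (rule step.IH)
  also have "\<dots> = int (rc (n+1) k)"
  proof (cases k)
    case 0
    then show ?thesis unfolding rc_int[OF n1] rc_int[OF n] tc_rec_int[OF n]
      by (simp add: algebra_simps)
  next
    case (Suc m)
    show ?thesis
    proof (cases m)
      case 0
      then show ?thesis unfolding rc_int[OF n1] rc_int[OF n] tc_rec_int[OF n] using Suc
        by (simp add: algebra_simps)
    next
      case (Suc j)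
      then show ?thesis unfolding rc_int[OF n1] rc_int[OF n] tc_rec_int[OF n] using \<open>k = Suc m\<close>
        by (simp add: algebra_simps)
    qed
  qed
  finally show ?case by simp
qed

lemma orbit_count:
  fixes X :: "(nat \<times> 'b) set" and act :: "(nat \<Rightarrow> nat) \<Rightarrow> 'b \<Rightarrow> 'b" and U :: "nat \<Rightarrow> nat set"
  assumes finX: "finite X"
  and finU: "\<And>k. finite (U k)" and cardU: "\<And>k. card (U k) = k"
  and clos: "\<And>k x p. (k,x) \<in> X \<Longrightarrow> p permutes U k \<Longrightarrow> (k, act p x) \<in> X"
  and aid: "\<And>k x. (k,x) \<in> X \<Longrightarrow> act id x = x"
  and acomp: "\<And>k x p q. (k,x) \<in> X \<Longrightarrow> p permutes U k \<Longrightarrow> q permutes U k \<Longrightarrow> act (p \<circ> q) x = act p (act q x)"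
  and free: "\<And>k x p. (k,x) \<in> X \<Longrightarrow> p permutes U k \<Longrightarrow> act p x = x \<Longrightarrow> p = id"
  and R: "R = {((k,x),(k',y)). (k,x) \<in> X \<and> k' = k \<and> (\<exists>p. p permutes U k \<and> y = act p x)}"
  shows "card {\<Gamma> \<in> X // R. unl \<Gamma> = k} * fact k = card {x. (k,x) \<in> X}" "finite (X // R)"
proof -
  have eq: "equiv X R"
  proof (rule equivI)
    show "R \<subseteq> X \<times> X" unfolding R using clos by auto
    show "refl_on X R" unfolding refl_on_def R
    proof (intro ballI)
      fix z assume "z \<in> X"
      then show "(z,z) \<in> {((k,x),(k',y)). (k,x) \<in> X \<and> k' = k \<and> (\<exists>p. p permutes U k \<and> y = act p x)}"
        using aid by (cases z) (auto intro!: exI[of _ id])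
    qed
    show "sym R"
    proof (rule symI)
      fix a b assume "(a,b) \<in> R"
      then obtain k x p where ab: "a = (k,x)" "b = (k, act p x)" and x: "(k,x) \<in> X" and p: "p permutes U k"
        unfolding R by auto
      have "act (inv p) (act p x) = act (inv p \<circ> p) x" using acomp[OF x permutes_inv[OF p] p] by simp
      also have "\<dots> = x" using permutes_inv_o(2)[OF p] aid[OF x] by simp
      finally show "(b,a) \<in> R" unfolding R using ab clos[OF x p] permutes_inv[OF p] by auto
    qed
    show "trans R"
    proof (rule transI)
      fix a b c assume "(a,b) \<in> R" "(b,c) \<in> R"
      then obtain k x p q where ab: "a = (k,x)" "b = (k, act p x)" "c = (k, act q (act p x))"
        and x: "(k,x) \<in> X" and p: "p permutes U k" and q: "q permutes U k"
        unfolding R by auto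
      show "(a,c) \<in> R" unfolding R using ab x acomp[OF x q p] permutes_compose[OF p q] by auto
    qed
  qed
  have cls: "R``{(k,x)} = (\<lambda>p. (k, act p x)) ` {p. p permutes U k}" if x: "(k,x) \<in> X" for k x
    unfolding R using x by auto
  have cardcls: "card (R``{(k,x)}) = fact k" if x: "(k,x) \<in> X" for k x
  proof -
    have "inj_on (\<lambda>p. (k, act p x)) {p. p permutes U k}"
    proof (rule inj_onI)
      fix p q assume p: "p \<in> {p. p permutes U k}" and q: "q \<in> {p. p permutes U k}"
        and e: "(k, act p x) = (k, act q x)"
      have pq: "p permutes U k" "q permutes U k" using p q by auto
      have "act (inv q \<circ> p) x = act (inv q) (act q x)" using acomp[OF x permutes_inv[OF pq(2)] pq(1)] e by simp
      also have "\<dots> = x" using acomp[OF x permutes_inv[OF pq(2)] pq(2)] permutes_inv_o(2)[OF pq(2)] aid[OF x] by simp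
      finally have "inv q \<circ> p = id" using free[OF x permutes_compose[OF pq(1) permutes_inv[OF pq(2)]]] by simp
      then have "q \<circ> (inv q \<circ> p) = q" by simp
      then show "p = q" using permutes_inv_o(1)[OF pq(2)] by (simp add: o_assoc)
    qed
    then show ?thesis using cls[OF x] card_permutations[OF cardU finU] by (simp add: card_image)
  qed
  have unlcls: "unl (R``{(k,x)}) = k" if x: "(k,x) \<in> X" for k x
  proof -
    have "(k, act id x) \<in> R``{(k,x)}" using cls[OF x] by auto
    then have "fst ` (R``{(k,x)}) = {k}" using cls[OF x] by force
    then show ?thesis by (simp add: unl_def)
  qed
  have fstcls: "fst z = k" if x: "(k,x) \<in> X" and z: "z \<in> R``{(k,x)}" for k x z
    using cls[OF x] z by auto
  show finQ: "finite (X // R)"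
  proof -
    have "X // R \<subseteq> Pow X" using in_quotient_imp_subset[OF eq] by auto
    then show ?thesis using finX finite_subset by blast
  qed
  let ?C = "{\<Gamma> \<in> X // R. unl \<Gamma> = k}"
  have U: "\<Union>?C = {z \<in> X. fst z = k}"
  proof
    show "\<Union>?C \<subseteq> {z \<in> X. fst z = k}"
    proof
      fix z assume "z \<in> \<Union>?C"
      then obtain \<Gamma> where G: "\<Gamma> \<in> X // R" "unl \<Gamma> = k" "z \<in> \<Gamma>" by blast
      then obtain y where y: "\<Gamma> = R``{y}" "y \<in> X" by (auto elim: quotientE)
      obtain k' x where "y = (k',x)" by (cases y)
      then show "z \<in> {z \<in> X. fst z = k}"
        using G y unlcls fstcls in_quotient_imp_subset[OF eq G(1)] by auto
    qed
    show "{z \<in> X. fst z = k} \<subseteq> \<Union>?C"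
    proof
      fix z assume z: "z \<in> {z \<in> X. fst z = k}"
      then obtain x where zx: "z = (k,x)" "(k,x) \<in> X" by (cases z) auto
      have "R``{z} \<in> ?C" using zx unlcls quotientI[of z X R] by auto
      moreover have "z \<in> R``{z}" using equiv_class_self[OF eq] zx by auto
      ultimately show "z \<in> \<Union>?C" by blast
    qed
  qed
  have "card (\<Union>?C) = sum card ?C"
  proof (rule card_Union_disjoint)
    show "pairwise disjnt ?C" using quotient_disj[OF eq] by (auto simp: pairwise_def disjnt_def)
    show "finite A" if "A \<in> ?C" for A using that in_quotient_imp_subset[OF eq] finX finite_subset by blast
  qed
  also have "\<dots> = sum (\<lambda>_. fact k) ?C"
  proof (rule sum.cong[OF refl])
    fix \<Gamma> assume G: "\<Gamma> \<in> ?C"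
    then obtain y where y: "\<Gamma> = R``{y}" "y \<in> X" by (auto elim: quotientE)
    obtain k' x where "y = (k',x)" by (cases y)
    then show "card \<Gamma> = fact k" using G y unlcls cardcls by auto
  qed
  also have "\<dots> = card ?C * fact k" by simp
  finally have "card ?C * fact k = card {z \<in> X. fst z = k}" using U by simp
  also have "{z \<in> X. fst z = k} = Pair k ` {x. (k,x) \<in> X}" by auto
  also have "card \<dots> = card {x. (k,x) \<in> X}" by (rule card_image) (simp add: inj_on_def)
  finally show "card ?C * fact k = card {x. (k,x) \<in> X}" .
qed

lemma verts_diff: "verts n k - {0..<n} = {n..<n+k}" by (auto simp: verts_def)
lemma verts_L: "{0..<n} \<subseteq> verts n k" by (auto simp: verts_def)
lemma fin_verts: "finite (verts n k)" by (simp add: verts_def)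
lemma card_verts_diff: "card (verts n k - {0..<n}) = k" by (simp add: verts_diff)

lemma raw_iff: "(k,E) \<in> greg_raw n \<longleftrightarrow> E \<in> trees {0..<n} (verts n k)"
  unfolding greg_raw_def trees_def verts_diff[symmetric] by auto

lemma rraw_iff: "(k,E,r) \<in> rgreg_raw n \<longleftrightarrow> (E,r) \<in> rtrees {0..<n} (verts n k)"
proof -
  have "(\<forall>v\<in>{n..<n+k}. v \<noteq> r \<longrightarrow> deg E v \<ge> 3) \<longleftrightarrow> (\<forall>v\<in>verts n k - insert r {0..<n}. deg E v \<ge> 3)"
    by (auto simp: verts_def)
  moreover have "r \<in> verts n k \<Longrightarrow> (n \<le> r \<longrightarrow> 2 \<le> deg E r) \<longleftrightarrow> (r \<in> {0..<n} \<or> 2 \<le> deg E r)" by auto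
  ultimately show ?thesis unfolding rgreg_raw_def rtrees_def trees_def by auto
qed

lemma perm_bij: "p permutes {n..<n+k} \<Longrightarrow> bij_betw p (verts n k) (verts n k)"
  by (rule permutes_imp_bij, rule permutes_subset) (auto simp: verts_def)

lemma perm_fixL: fixes n k x :: nat assumes "p permutes {n..<n+k}" "x < n" shows "p x = x"
proof -
  have "x \<notin> {n..<n+k}" using assms(2) by simp
  then show ?thesis using assms(1) by (simp add: permutes_def)
qed

lemma perm_imgL: fixes n k :: nat shows "p permutes {n..<n+k} \<Longrightarrow> p ` {0..<n} = {0..<n}"
  using perm_fixL by force

lemma lab_iso_perm1:
  assumes E: "E \<subseteq> Pow (verts n k)" and li: "lab_iso n k E E' f"
  shows "\<exists>p. p permutes {n..<n+k} \<and> E' = imgE p E \<and> (\<forall>x\<in>verts n k. p x = f x)"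
proof -
  have bij: "bij_betw f (verts n k) (verts n k)" and fx: "\<forall>i<n. f i = i" and E': "E' = (\<lambda>e. f ` e) ` E"
    using li by (auto simp: lab_iso_def)
  define U where "U = {n..<n+k}"
  define p where "p x = (if x \<in> U then f x else x)" for x
  have inj: "inj_on f (verts n k)" and im: "f ` verts n k = verts n k" using bij by (auto simp: bij_betw_def)
  have fL: "f ` {0..<n} = {0..<n}" using fx by force
  have "f ` U = U"
    unfolding U_def verts_diff[symmetric] using inj_on_image_set_diff[OF inj, of "verts n k" "{0..<n}"] im fL verts_L
    by simp
  moreover have "inj_on f U" using inj by (rule inj_on_subset) (auto simp: U_def verts_def)
  ultimately have "bij_betw f U U" by (simp add: bij_betw_def)
  moreover have "bij_betw p U U = bij_betw f U U" by (rule bij_betw_cong) (simp add: p_def)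
  ultimately have "bij_betw p U U" by simp
  then have perm: "p permutes U" by (rule bij_imp_permutes) (simp add: p_def)
  have agree: "\<forall>x\<in>verts n k. p x = f x" using fx by (auto simp: p_def U_def verts_def)
  have "E' = imgE p E"
    unfolding E' imgE_def
  proof (rule image_cong[OF refl])
    fix e assume "e \<in> E"
    then have "e \<subseteq> verts n k" using E by auto
    then show "f ` e = p ` e" using agree by (auto intro!: image_cong)
  qed
  then show ?thesis using perm agree by (auto simp: U_def)
qed

lemma lab_iso_perm2: "p permutes {n..<n+k} \<Longrightarrow> lab_iso n k E (imgE p E) p"
  unfolding lab_iso_def imgE_def using perm_bij perm_fixL by auto

lemma imgE_id: "imgE id E = E" by (simp add: imgE_def)
lemma imgE_comp: "imgE (p \<circ> q) E = imgE p (imgE q E)" by (simp add: imgE_def image_comp)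

lemma raw_sub: "(k,E) \<in> greg_raw n \<Longrightarrow> E \<subseteq> Pow (verts n k)"
  unfolding raw_iff trees_def using wfE_sub tree_wf by blast

lemma perm_id_from_aut:
  assumes T: "is_tree (verts n k) E" and p: "p permutes {n..<n+k}" and im: "imgE p E = E"
    and lf: "\<forall>v\<in>verts n k. deg E v \<le> 1 \<longrightarrow> p v = v"
  shows "p = id"
proof
  fix x
  have "\<forall>v\<in>verts n k. p v = v" using tree_aut[OF T perm_bij[OF p] im lf] .
  moreover have "x \<notin> verts n k \<Longrightarrow> p x = x" using p by (rule permutes_not_in) (auto simp: verts_def)
  ultimately show "p x = id x" by (cases "x \<in> verts n k") auto
qed

lemma greg_rel_eq: "greg_rel n = {((k,x),(k',y)). (k,x) \<in> greg_raw n \<and> k' = k \<and> (\<exists>p. p permutes {n..<n+k} \<and> y = imgE p x)}"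
proof -
  have clos: "(k, imgE p E) \<in> greg_raw n" if "(k,E) \<in> greg_raw n" "p permutes {n..<n+k}" for k E p
    using trees_imgE[OF perm_bij[OF that(2)], of E "{0..<n}"] that perm_imgL[OF that(2)] verts_L
    by (auto simp: raw_iff)
  show ?thesis
    unfolding greg_rel_def
  proof (intro set_eqI iffI)
    fix z assume "z \<in> {((k, E), k', E'). (k, E) \<in> greg_raw n \<and> (k', E') \<in> greg_raw n \<and> k = k' \<and> (\<exists>f. lab_iso n k E E' f)}"
    then obtain k E E' f where z: "z = ((k,E),(k,E'))" "(k,E) \<in> greg_raw n" "lab_iso n k E E' f" by auto
    then show "z \<in> {((k,x),(k',y)). (k,x) \<in> greg_raw n \<and> k' = k \<and> (\<exists>p. p permutes {n..<n+k} \<and> y = imgE p x)}"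
      using lab_iso_perm1[OF raw_sub[OF z(2)] z(3)] by auto
  next
    fix z assume "z \<in> {((k,x),(k',y)). (k,x) \<in> greg_raw n \<and> k' = k \<and> (\<exists>p. p permutes {n..<n+k} \<and> y = imgE p x)}"
    then obtain k E p where z: "z = ((k,E),(k,imgE p E))" "(k,E) \<in> greg_raw n" "p permutes {n..<n+k}" by auto
    then show "z \<in> {((k, E), k', E'). (k, E) \<in> greg_raw n \<and> (k', E') \<in> greg_raw n \<and> k = k' \<and> (\<exists>f. lab_iso n k E E' f)}"
      using clos[OF z(2,3)] lab_iso_perm2[OF z(3)] by auto
  qed
qed

lemma finite_greg_raw: "finite (greg_raw n)"
proof -
  have "greg_raw n \<subseteq> (SIGMA k:{..n}. Pow (Pow (verts n k)))"
  proof clarify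
    fix k E assume kE: "(k,E) \<in> greg_raw n"
    then have "E \<in> trees {0..<n} (verts n k)" by (simp add: raw_iff)
    then have "card (verts n k - {0..<n}) \<le> card {0..<n}" using trees_bound verts_L by blast
    then show "k \<in> {..n} \<and> E \<in> Pow (Pow (verts n k))" using raw_sub[OF kE] card_verts_diff by auto
  qed
  moreover have "finite (SIGMA k:{..n}. Pow (Pow (verts n k)))" by (simp add: fin_verts)
  ultimately show ?thesis using finite_subset by blast
qed

lemma greg_clos: "(k,x) \<in> greg_raw n \<Longrightarrow> p permutes {n..<n+k} \<Longrightarrow> (k, imgE p x) \<in> greg_raw n"
  using trees_imgE[OF perm_bij, of p n k x "{0..<n}"] perm_imgL[of p n k] verts_L
  by (auto simp: raw_iff)

lemma greg_free:
  assumes x: "(k,x) \<in> greg_raw n" and p: "p permutes {n..<n+k}" and im: "imgE p x = x"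
  shows "p = id"
proof (rule perm_id_from_aut[OF _ p im])
  have xt: "x \<in> trees {0..<n} (verts n k)" using x by (simp add: raw_iff)
  then show "is_tree (verts n k) x" by (simp add: trees_def)
  show "\<forall>v\<in>verts n k. deg x v \<le> 1 \<longrightarrow> p v = v"
  proof (intro ballI impI)
    fix v assume "v \<in> verts n k" "deg x v \<le> 1"
    moreover have "v \<in> verts n k - {0..<n} \<Longrightarrow> deg x v \<ge> 3" using xt by (simp add: trees_def)
    ultimately have "v < n" by (cases "v < n") auto
    then show "p v = v" using perm_fixL[OF p] by simp
  qed
qed

lemma greg_orbit:
  shows "card {\<Gamma> \<in> greg_trees n. unl \<Gamma> = k} * fact k = tc n k" "finite (greg_trees n)"
proof -
  have fU: "\<And>k. finite {n..<n+k}" by simp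
  have cU: "\<And>k. card {n..<n+k} = k" by simp
  have aid: "\<And>k x. (k,x) \<in> greg_raw n \<Longrightarrow> imgE id x = x" by (simp add: imgE_id)
  have acomp: "\<And>k x p q. (k,x) \<in> greg_raw n \<Longrightarrow> p permutes {n..<n+k} \<Longrightarrow> q permutes {n..<n+k}
      \<Longrightarrow> imgE (p \<circ> q) x = imgE p (imgE q x)" by (simp add: imgE_comp)
  note oc = orbit_count[where X = "greg_raw n" and U = "\<lambda>k. {n..<n+k}" and act = imgE and R = "greg_rel n",
      OF finite_greg_raw fU cU greg_clos aid acomp greg_free greg_rel_eq]
  have "{x. (k,x) \<in> greg_raw n} = trees {0..<n} (verts n k)" by (auto simp: raw_iff)
  then show "card {\<Gamma> \<in> greg_trees n. unl \<Gamma> = k} * fact k = tc n k"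
    using oc(1)[where k=k] by (simp add: greg_trees_def tc_def verts_def)
  show "finite (greg_trees n)" using oc(2) by (simp add: greg_trees_def)
qed

definition ract :: "(nat \<Rightarrow> nat) \<Rightarrow> nat set set \<times> nat \<Rightarrow> nat set set \<times> nat" where
  "ract p x = (imgE p (fst x), p (snd x))"

lemma rraw_sub: "(k,E,r) \<in> rgreg_raw n \<Longrightarrow> E \<subseteq> Pow (verts n k) \<and> r \<in> verts n k"
  unfolding rraw_iff rtrees_def trees_def using wfE_sub tree_wf by blast

lemma rgreg_clos: assumes x: "(k,x) \<in> rgreg_raw n" and p: "p permutes {n..<n+k}"
  shows "(k, ract p x) \<in> rgreg_raw n"
proof -
  obtain E r where xe: "x = (E,r)" by (cases x)
  have R: "(E,r) \<in> rtrees {0..<n} (verts n k)" using x xe rraw_iff by simp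
  then have rV: "r \<in> verts n k" and Et: "E \<in> trees (insert r {0..<n}) (verts n k)"
    and rc: "r \<in> {0..<n} \<or> deg E r \<ge> 2" by (auto simp: rtrees_def)
  have bij: "bij_betw p (verts n k) (verts n k)" using perm_bij[OF p] .
  have sub: "insert r {0..<n} \<subseteq> verts n k" using rV verts_L by auto
  have im: "p ` insert r {0..<n} = insert (p r) {0..<n}" using perm_imgL[OF p] by simp
  have t2: "imgE p E \<in> trees (insert (p r) {0..<n}) (verts n k)"
    using trees_imgE[OF bij Et sub] im by simp
  have prV: "p r \<in> verts n k" using bij rV by (auto simp: bij_betw_def)
  have "p r \<in> {0..<n} \<or> deg (imgE p E) (p r) \<ge> 2"
  proof (cases "r \<in> {0..<n}")
    case True then show ?thesis using perm_fixL[OF p] by simp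
  next
    case False
    then have "deg E r \<ge> 2" using rc by simp
    moreover have "deg (imgE p E) (p r) = deg E r"
      using tree_imgE(2)[OF bij _ rV] Et by (simp add: trees_def)
    ultimately show ?thesis by simp
  qed
  then show ?thesis using t2 prV xe rraw_iff by (simp add: ract_def rtrees_def)
qed

lemma rgreg_free:
  assumes x: "(k,x) \<in> rgreg_raw n" and p: "p permutes {n..<n+k}" and im: "ract p x = x"
  shows "p = id"
proof -
  obtain E r where xe: "x = (E,r)" by (cases x)
  have R: "(E,r) \<in> rtrees {0..<n} (verts n k)" using x xe rraw_iff by simp
  then have Et: "E \<in> trees (insert r {0..<n}) (verts n k)" by (auto simp: rtrees_def)
  have imE: "imgE p E = E" and pr: "p r = r" using im xe by (auto simp: ract_def)
  show ?thesis
  proof (rule perm_id_from_aut[OF _ p imE])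
    show "is_tree (verts n k) E" using Et by (simp add: trees_def)
    show "\<forall>v\<in>verts n k. deg E v \<le> 1 \<longrightarrow> p v = v"
    proof (intro ballI impI)
      fix v assume "v \<in> verts n k" "deg E v \<le> 1"
      moreover have "v \<in> verts n k - insert r {0..<n} \<Longrightarrow> deg E v \<ge> 3" using Et by (simp add: trees_def)
      ultimately have "v < n \<or> v = r" by (cases "v < n \<or> v = r") auto
      then show "p v = v" using perm_fixL[OF p] pr by auto
    qed
  qed
qed

lemma rgreg_rel_eq: "rgreg_rel n = {((k,x),(k',y)). (k,x) \<in> rgreg_raw n \<and> k' = k \<and> (\<exists>p. p permutes {n..<n+k} \<and> y = ract p x)}"
  unfolding rgreg_rel_def
proof (intro set_eqI iffI)
  fix z assume "z \<in> {((k, E, r), k', E', r'). (k, E, r) \<in> rgreg_raw n \<and> (k', E', r') \<in> rgreg_raw n \<and> k = k' \<and> (\<exists>f. lab_iso n k E E' f \<and> f r = r')}"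
  then obtain k E r E' r' f where z: "z = ((k,E,r),(k,E',r'))" "(k,E,r) \<in> rgreg_raw n" "lab_iso n k E E' f" "f r = r'"
    by auto
  obtain p where p: "p permutes {n..<n+k}" "E' = imgE p E" "\<forall>x\<in>verts n k. p x = f x"
    using lab_iso_perm1[OF conjunct1[OF rraw_sub[OF z(2)]] z(3)] by blast
  have "p r = r'" using p(3) rraw_sub[OF z(2)] z(4) by auto
  then show "z \<in> {((k,x),(k',y)). (k,x) \<in> rgreg_raw n \<and> k' = k \<and> (\<exists>p. p permutes {n..<n+k} \<and> y = ract p x)}"
    using z p by (auto simp: ract_def)
next
  fix z assume "z \<in> {((k,x),(k',y)). (k,x) \<in> rgreg_raw n \<and> k' = k \<and> (\<exists>p. p permutes {n..<n+k} \<and> y = ract p x)}"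
  then obtain k x p where z: "z = ((k,x),(k,ract p x))" "(k,x) \<in> rgreg_raw n" "p permutes {n..<n+k}" by auto
  obtain E r where xe: "x = (E,r)" by (cases x)
  show "z \<in> {((k, E, r), k', E', r'). (k, E, r) \<in> rgreg_raw n \<and> (k', E', r') \<in> rgreg_raw n \<and> k = k' \<and> (\<exists>f. lab_iso n k E E' f \<and> f r = r')}"
    using rgreg_clos[OF z(2,3)] lab_iso_perm2[OF z(3), of E] z xe by (auto simp: ract_def)
qed

lemma finite_rgreg_raw: "finite (rgreg_raw n)"
proof -
  have "rgreg_raw n \<subseteq> (SIGMA k:{..n+2}. Pow (Pow (verts n k)) \<times> verts n k)"
  proof
    fix z assume z: "z \<in> rgreg_raw n"
    obtain k E r where zk: "z = (k,E,r)" by (cases z) auto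
    have kE: "(k,E,r) \<in> rgreg_raw n" using z zk by simp
    then have R: "(E,r) \<in> rtrees {0..<n} (verts n k)" by (simp add: rraw_iff)
    then have Et: "E \<in> trees (insert r {0..<n}) (verts n k)" and rV: "r \<in> verts n k" by (auto simp: rtrees_def)
    have sub: "insert r {0..<n} \<subseteq> verts n k" using rV verts_L by auto
    have "card (verts n k - insert r {0..<n}) \<le> card (insert r {0..<n})" using trees_bound[OF Et sub] .
    moreover have "card (insert r {0..<n}) \<le> n + 1" by (simp add: card_insert_if)
    moreover have "card (verts n k - {0..<n}) \<le> card (insert r (verts n k - insert r {0..<n}))"
      by (rule card_mono) (auto simp: fin_verts)
    moreover have "card (insert r (verts n k - insert r {0..<n})) \<le> card (verts n k - insert r {0..<n}) + 1"
      using fin_verts by (simp add: card_insert_if)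
    ultimately have "k \<le> n+2" using card_verts_diff[of n k] by linarith
    then show "z \<in> (SIGMA k:{..n+2}. Pow (Pow (verts n k)) \<times> verts n k)"
      using rraw_sub[OF kE] zk by auto
  qed
  moreover have "finite (SIGMA k:{..n+2}. Pow (Pow (verts n k)) \<times> verts n k)" by (simp add: fin_verts)
  ultimately show ?thesis using finite_subset by blast
qed

lemma rgreg_orbit:
  shows "card {\<Gamma> \<in> rooted_greg_trees n. unl \<Gamma> = k} * fact k = rc n k" "finite (rooted_greg_trees n)"
proof -
  have fU: "\<And>k. finite {n..<n+k}" by simp
  have cU: "\<And>k. card {n..<n+k} = k" by simp
  have aid: "\<And>k x. (k,x) \<in> rgreg_raw n \<Longrightarrow> ract id x = x" by (simp add: ract_def imgE_id)
  have acomp: "\<And>k x p q. (k,x) \<in> rgreg_raw n \<Longrightarrow> p permutes {n..<n+k} \<Longrightarrow> q permutes {n..<n+k}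
      \<Longrightarrow> ract (p \<circ> q) x = ract p (ract q x)" by (simp add: ract_def imgE_comp)
  note oc = orbit_count[where X = "rgreg_raw n" and U = "\<lambda>k. {n..<n+k}" and act = ract and R = "rgreg_rel n",
      OF finite_rgreg_raw fU cU rgreg_clos aid acomp rgreg_free rgreg_rel_eq]
  have "{x. (k,x) \<in> rgreg_raw n} = rtrees {0..<n} (verts n k)" using rraw_iff by auto
  moreover have "card (rtrees {0..<n} (verts n k)) = rc n k"
    using card_rtrees_rc[OF fin_verts verts_L] card_verts_diff by simp
  ultimately show "card {\<Gamma> \<in> rooted_greg_trees n. unl \<Gamma> = k} * fact k = rc n k"
    using oc(1)[where k=k] by (simp add: rooted_greg_trees_def)
  show "finite (rooted_greg_trees n)" using oc(2) by (simp add: rooted_greg_trees_def)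
qed

lemma coeff_sum_unl:
  fixes Q :: "(nat \<times> 'a) set set"
  assumes "finite Q"
  shows "coeff (\<Sum>\<Gamma>\<in>Q. monom (1::int) (unl \<Gamma>)) k = int (card {\<Gamma> \<in> Q. unl \<Gamma> = k})"
proof -
  have "coeff (\<Sum>\<Gamma>\<in>Q. monom (1::int) (unl \<Gamma>)) k = (\<Sum>\<Gamma>\<in>Q. if unl \<Gamma> = k then 1 else 0)"
    by (simp add: coeff_sum)
  also have "\<dots> = (\<Sum>\<Gamma>\<in>{\<Gamma> \<in> Q. unl \<Gamma> = k}. 1)" using sum.inter_filter[OF assms, of "\<lambda>_. (1::int)"] by simp
  also have "\<dots> = int (card {\<Gamma> \<in> Q. unl \<Gamma> = k})" by simp
  finally show ?thesis .
qed

theorem mainTheorem2: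
  fixes n :: nat
  assumes "n \<ge> 1"
  shows "G n = (\<Sum>\<Gamma>\<in>rooted_greg_trees n. monom 1 (unl \<Gamma>)) \<and>
         H n = (\<Sum>\<Gamma>\<in>greg_trees n. monom 1 (unl \<Gamma>))"
proof
  show "G n = (\<Sum>\<Gamma>\<in>rooted_greg_trees n. monom 1 (unl \<Gamma>))"
  proof (rule poly_eqI)
    fix k
    have "int (card {\<Gamma> \<in> rooted_greg_trees n. unl \<Gamma> = k} * fact k) = int (card {\<Gamma> \<in> rooted_greg_trees n. unl \<Gamma> = k}) * fact k"
      by (simp only: of_nat_mult of_nat_fact)
    then have "coeff (G n) k * fact k = int (card {\<Gamma> \<in> rooted_greg_trees n. unl \<Gamma> = k}) * fact k"
      using G_coeff[OF assms, of k] rgreg_orbit(1)[of n k] by simp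
    then have "coeff (G n) k = int (card {\<Gamma> \<in> rooted_greg_trees n. unl \<Gamma> = k})" by simp
    then show "coeff (G n) k = coeff (\<Sum>\<Gamma>\<in>rooted_greg_trees n. monom 1 (unl \<Gamma>)) k"
      using coeff_sum_unl[OF rgreg_orbit(2)] by simp
  qed
  show "H n = (\<Sum>\<Gamma>\<in>greg_trees n. monom 1 (unl \<Gamma>))"
  proof (rule poly_eqI)
    fix k
    have "int (card {\<Gamma> \<in> greg_trees n. unl \<Gamma> = k} * fact k) = int (card {\<Gamma> \<in> greg_trees n. unl \<Gamma> = k}) * fact k"
      by (simp only: of_nat_mult of_nat_fact)
    then have "coeff (H n) k * fact k = int (card {\<Gamma> \<in> greg_trees n. unl \<Gamma> = k}) * fact k"
      using H_coeff[OF assms, of k] greg_orbit(1)[of n k] by simp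
    then have "coeff (H n) k = int (card {\<Gamma> \<in> greg_trees n. unl \<Gamma> = k})" by simp
    then show "coeff (H n) k = coeff (\<Sum>\<Gamma>\<in>greg_trees n. monom 1 (unl \<Gamma>)) k"
      using coeff_sum_unl[OF greg_orbit(2)] by simp
  qed
qed

end
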